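(* Let $G=(V,E)$ be a rigid graph with $V=\{v_1,v_2,\ldots,v_n\}$ and $n\ge3$, and let $(G,p)$ be a quasi-generic complex realisation of $G$ with $p(v_1)=(0,0)$ and $p(v_2)=(0,y)$ for some $y\in\mathbb{C}$. Let $(G,q)$ be a complex realisation of $G$ equivalent to $(G,p)$ with $q(v_1)=(0,0)$ and $q(v_2)=(0,z)$ for some $z\in\mathbb{C}$. Then $\overline{\mathbb{Q}(p)}=\overline{\mathbb{Q}(q)}=\overline{\mathbb{Q}(d_G(p))}$ and $\operatorname{trdeg}[\mathbb{Q}(q):\mathbb{Q}]=2n-3$.
   Context: A complex realisation of a finite graph $G=(V,E)$ is a map $p:V\to\mathbb{C}^2$. For $P=(x,y)\in\mathbb{C}^2$ put $d(P)=x^2+y^2$. Realisations $(G,p),(G,q)$ are equivalent if $d(p(u)-p(v))=d(q(u)-q(v))$ for all $uv\in E$, and congruent if this holds for all $u,v\in V$. A realisation is generic if the set of all coordinates of the points $p(v)$ is algebraically independent over $\mathbb{Q}$, and quasi-generic if it is congruent to a generic realisation. The rigidity matrix $R(G,p)$ is the $|E|\times2|V|$ matrix whose row for edge $uv$ has $p(u)-p(v)$ in the columns of $u$, $p(v)-p(u)$ in the columns of $v$, zeros elsewhere; $G$ is rigid if $\operatorname{rank}R(G,p)=2|V|-3$ for a generic real realisation $p$. $\mathbb{Q}(p)$ denotes the field generated over $\mathbb{Q}$ by all coordinates of the points $p(v)$, $v\in V$; $d_G(p)=(d(p(u)-p(v)))_{uv\in E}\in\mathbb{C}^{|E|}$ and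 $\mathbb{Q}(d_G(p))$ is the field generated over $\mathbb{Q}$ by its entries; $\overline{K}$ is the algebraic closure of $K$, and $\operatorname{trdeg}$ denotes transcendence degree. *)

theory Defs
  imports Complex_Main "HOL-Library.Poly_Mapping" "HOL-Computational_Algebra.Polynomial"
    "HOL-Library.Extended_Nat"
begin

(* Multivariate polynomials over Q in variables indexed by 'i:
   finitely supported maps from monomials (finitely supported exponent maps) to rationals. *)
type_synonym 'i qpoly = "('i \<Rightarrow>\<^sub>0 nat) \<Rightarrow>\<^sub>0 rat"

definition eval_qpoly :: "('i \<Rightarrow> 'a::field_char_0) \<Rightarrow> 'i qpoly \<Rightarrow> 'a" where
  "eval_qpoly x P = (\<Sum>m\<in>Poly_Mapping.keys P. of_rat (Poly_Mapping.lookup P m) *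
      (\<Prod>i\<in>Poly_Mapping.keys (m :: 'i \<Rightarrow>\<^sub>0 nat). x i ^ Poly_Mapping.lookup m i))"

definition alg_indep :: "('i \<Rightarrow> 'a::field_char_0) \<Rightarrow> 'i set \<Rightarrow> bool" where
  "alg_indep x I \<longleftrightarrow>
     (\<forall>P :: 'i qpoly. (\<forall>m\<in>Poly_Mapping.keys P. Poly_Mapping.keys m \<subseteq> I) \<and> eval_qpoly x P = 0 \<longrightarrow> P = 0)"

definition alg_indep_set :: "complex set \<Rightarrow> bool" where
  "alg_indep_set B \<longleftrightarrow> alg_indep (\<lambda>z. z) B"

definition is_subfield :: "complex set \<Rightarrow> bool" where
  "is_subfield F \<longleftrightarrow> 0 \<in> F \<and> 1 \<in> F \<and> (\<forall>a\<in>F. \<forall>b\<in>F. a + b \<in> F \<and> a - b \<in> F \<and> a * b \<in> F)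
     \<and> (\<forall>a\<in>F. inverse a \<in> F)"

definition field_gen :: "complex set \<Rightarrow> complex set" where
  "field_gen S = \<Inter>{F. is_subfield F \<and> S \<subseteq> F}"

(* algebraic closure of a subfield K of C (taken inside C, which is algebraically closed) *)
definition alg_closure :: "complex set \<Rightarrow> complex set" where
  "alg_closure K = {z. \<exists>f :: complex poly. f \<noteq> 0 \<and> (\<forall>i. coeff f i \<in> K) \<and> poly f z = 0}"

definition trdeg :: "complex set \<Rightarrow> enat" where
  "trdeg K = (SUP B\<in>{B. finite B \<and> B \<subseteq> K \<and> alg_indep_set B}. enat (card B))"

definition dsq :: "complex \<times> complex \<Rightarrow> complex" where
  "dsq P = (fst P)\<^sup>2 + (snd P)\<^sup>2"

definition cdiff :: "complex \<times> complex \<Rightarrow> complex \<times> complex \<Rightarrow> complex \<times> complex" where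
  "cdiff P Q = (fst P - fst Q, snd P - snd Q)"

(* Graph G = (V,E): finite vertex set, edges as (oriented) pairs of distinct vertices *)
definition graph :: "'v set \<Rightarrow> ('v \<times> 'v) set \<Rightarrow> bool" where
  "graph V E \<longleftrightarrow> finite V \<and> E \<subseteq> V \<times> V \<and> (\<forall>(u,v)\<in>E. u \<noteq> v)"

(* coordinates of a realisation, indexed by (vertex, False = x / True = y) *)
definition coord :: "('v \<Rightarrow> 'a \<times> 'a) \<Rightarrow> 'v \<times> bool \<Rightarrow> 'a" where
  "coord p vi = (if snd vi then snd (p (fst vi)) else fst (p (fst vi)))"

definition generic :: "'v set \<Rightarrow> ('v \<Rightarrow> complex \<times> complex) \<Rightarrow> bool" where
  "generic V p \<longleftrightarrow> alg_indep (coord p) (V \<times> UNIV)"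

definition generic_real :: "'v set \<Rightarrow> ('v \<Rightarrow> real \<times> real) \<Rightarrow> bool" where
  "generic_real V p \<longleftrightarrow> alg_indep (coord p) (V \<times> UNIV)"

definition congruent_rlz :: "'v set \<Rightarrow> ('v \<Rightarrow> complex \<times> complex) \<Rightarrow> ('v \<Rightarrow> complex \<times> complex) \<Rightarrow> bool" where
  "congruent_rlz V p q \<longleftrightarrow> (\<forall>u\<in>V. \<forall>v\<in>V. dsq (cdiff (p u) (p v)) = dsq (cdiff (q u) (q v)))"

definition equivalent :: "('v \<times> 'v) set \<Rightarrow> ('v \<Rightarrow> complex \<times> complex) \<Rightarrow> ('v \<Rightarrow> complex \<times> complex) \<Rightarrow> bool" where
  "equivalent E p q \<longleftrightarrow> (\<forall>(u,v)\<in>E. dsq (cdiff (p u) (p v)) = dsq (cdiff (q u) (q v)))"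

definition quasi_generic :: "'v set \<Rightarrow> ('v \<Rightarrow> complex \<times> complex) \<Rightarrow> bool" where
  "quasi_generic V p \<longleftrightarrow> (\<exists>p0. generic V p0 \<and> congruent_rlz V p p0)"

(* row of the rigidity matrix for edge (u,v), as a function of the column index (w, coordinate) *)
definition rig_row :: "('v \<Rightarrow> real \<times> real) \<Rightarrow> 'v \<times> 'v \<Rightarrow> 'v \<times> bool \<Rightarrow> real" where
  "rig_row p e c = (let (u,v) = e; (w,i) = c in
      (if w = u then coord p (u,i) - coord p (v,i)
       else if w = v then coord p (v,i) - coord p (u,i) else 0))"

definition rig_rank :: "('v \<times> 'v) set \<Rightarrow> ('v \<Rightarrow> real \<times> real) \<Rightarrow> nat" where
  "rig_rank E p = Max {card F | F. F \<subseteq> E \<and>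
      (\<forall>c :: 'v \<times> 'v \<Rightarrow> real. (\<forall>x. (\<Sum>e\<in>F. c e * rig_row p e x) = 0) \<longrightarrow> (\<forall>e\<in>F. c e = 0))}"

definition rigid :: "'v set \<Rightarrow> ('v \<times> 'v) set \<Rightarrow> bool" where
  "rigid V E \<longleftrightarrow> (\<exists>p. generic_real V p \<and> rig_rank E p = 2 * card V - 3)"

definition coords :: "'v set \<Rightarrow> ('v \<Rightarrow> complex \<times> complex) \<Rightarrow> complex set" where
  "coords V p = coord p ` (V \<times> UNIV)"

definition dG :: "('v \<times> 'v) set \<Rightarrow> ('v \<Rightarrow> complex \<times> complex) \<Rightarrow> complex set" where
  "dG E p = (\<lambda>(u,v). dsq (cdiff (p u) (p v))) ` E"

end

theory Submission
  imports Defs "HOL-Library.FuncSet" "HOL-Algebra.Finite_Extensions"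
begin

definition qmono :: "('i \<Rightarrow> 'a::field_char_0) \<Rightarrow> ('i \<Rightarrow>\<^sub>0 nat) \<Rightarrow> 'a" where
  "qmono x m = (\<Prod>i\<in>Poly_Mapping.keys m. x i ^ Poly_Mapping.lookup m i)"

lemma qmono_superset:
  assumes "finite A" "Poly_Mapping.keys m \<subseteq> A"
  shows "qmono x m = (\<Prod>i\<in>A. x i ^ Poly_Mapping.lookup m i)"
  unfolding qmono_def
  by (rule prod.mono_neutral_left[OF assms]) (auto simp: in_keys_iff)

lemma qmono_add: "qmono x (m + l) = qmono x m * qmono x l"
proof -
  let ?A = "Poly_Mapping.keys m \<union> Poly_Mapping.keys l"
  have f: "finite ?A" by simp
  have "Poly_Mapping.keys (m + l) \<subseteq> ?A" by (simp add: keys_add)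
  then have "qmono x (m + l) = (\<Prod>i\<in>?A. x i ^ Poly_Mapping.lookup (m+l) i)"
    by (rule qmono_superset[OF f])
  also have "\<dots> = (\<Prod>i\<in>?A. x i ^ Poly_Mapping.lookup m i) * (\<Prod>i\<in>?A. x i ^ Poly_Mapping.lookup l i)"
    by (simp add: lookup_add power_add prod.distrib)
  also have "\<dots> = qmono x m * qmono x l"
    using qmono_superset[OF f, of m x] qmono_superset[OF f, of l x] by auto
  finally show ?thesis .
qed

lemma qmono_zero[simp]: "qmono x 0 = 1" by (simp add: qmono_def)

lemma qmono_single[simp]: "qmono x (Poly_Mapping.single i k) = x i ^ k"
  by (simp add: qmono_def)

lemma eval_qpoly_alt: "eval_qpoly x P = (\<Sum>m\<in>Poly_Mapping.keys P. of_rat (Poly_Mapping.lookup P m) * qmono x m)"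
  by (simp add: eval_qpoly_def qmono_def)

lemma eval_superset:
  assumes "finite A" "Poly_Mapping.keys P \<subseteq> A"
  shows "eval_qpoly x P = (\<Sum>m\<in>A. of_rat (Poly_Mapping.lookup P m) * qmono x m)"
  unfolding eval_qpoly_alt
  by (rule sum.mono_neutral_left[OF assms]) (auto simp: in_keys_iff)

lemma eval_add: "eval_qpoly x (P + Q) = eval_qpoly x P + eval_qpoly x Q"
proof -
  let ?A = "Poly_Mapping.keys P \<union> Poly_Mapping.keys Q"
  have f: "finite ?A" by simp
  have "eval_qpoly x (P + Q) = (\<Sum>m\<in>?A. of_rat (Poly_Mapping.lookup (P+Q) m) * qmono x m)"
    by (rule eval_superset[OF f]) (simp add: keys_add)
  also have "\<dots> = (\<Sum>m\<in>?A. of_rat (Poly_Mapping.lookup P m) * qmono x m) + (\<Sum>m\<in>?A. of_rat (Poly_Mapping.lookup Q m) * qmono x m)"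
    by (simp add: lookup_add of_rat_add distrib_right sum.distrib)
  also have "\<dots> = eval_qpoly x P + eval_qpoly x Q"
    using eval_superset[OF f, of P x] eval_superset[OF f, of Q x] by auto
  finally show ?thesis .
qed

lemma eval_zero[simp]: "eval_qpoly x 0 = 0" by (simp add: eval_qpoly_def)

lemma eval_single[simp]: "eval_qpoly x (Poly_Mapping.single m c) = of_rat c * qmono x m"
  by (simp add: eval_qpoly_alt)

lemma eval_sum: "eval_qpoly x (sum f A) = (\<Sum>a\<in>A. eval_qpoly x (f a))"
  by (induction A rule: infinite_finite_induct) (auto simp: eval_add)

lemma eval_uminus: "eval_qpoly x (- P) = - eval_qpoly x P"
  using eval_add[of x P "-P"] by (simp add: eq_neg_iff_add_eq_0 add.commute)

lemma eval_diff: "eval_qpoly x (P - Q) = eval_qpoly x P - eval_qpoly x Q"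
  using eval_add[of x P "-Q"] eval_uminus[of x Q] by simp

lemma qpoly_sum_single: "P = (\<Sum>m\<in>Poly_Mapping.keys P. Poly_Mapping.single m (Poly_Mapping.lookup P m))"
  by (rule poly_mapping_eqI) (auto simp: lookup_sum lookup_single when_def in_keys_iff intro: sum.neutral
      simp: sum.delta' )

lemma eval_mult: "eval_qpoly x (P * Q) = eval_qpoly x P * eval_qpoly x Q"
proof -
  have "P * Q = (\<Sum>m\<in>Poly_Mapping.keys P. Poly_Mapping.single m (Poly_Mapping.lookup P m)) *
                (\<Sum>l\<in>Poly_Mapping.keys Q. Poly_Mapping.single l (Poly_Mapping.lookup Q l))"
    using qpoly_sum_single[of P] qpoly_sum_single[of Q] by simp
  also have "\<dots> = (\<Sum>m\<in>Poly_Mapping.keys P. \<Sum>l\<in>Poly_Mapping.keys Q.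
       Poly_Mapping.single (m + l) (Poly_Mapping.lookup P m * Poly_Mapping.lookup Q l))"
    by (simp add: sum_product mult_single)
  finally have "eval_qpoly x (P * Q) = (\<Sum>m\<in>Poly_Mapping.keys P. \<Sum>l\<in>Poly_Mapping.keys Q.
       of_rat (Poly_Mapping.lookup P m) * qmono x m * (of_rat (Poly_Mapping.lookup Q l) * qmono x l))"
    by (simp add: eval_sum qmono_add of_rat_mult ac_simps)
  also have "\<dots> = eval_qpoly x P * eval_qpoly x Q"
    by (simp add: eval_qpoly_alt sum_product)
  finally show ?thesis .
qed

lemma eval_one[simp]: "eval_qpoly x 1 = 1"
  by (simp add: eval_qpoly_alt lookup_one when_def)

lemma eval_power: "eval_qpoly x (P ^ k) = eval_qpoly x P ^ k"
  by (induction k) (auto simp: eval_mult)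

lemma eval_prod: "eval_qpoly x (prod f A) = (\<Prod>a\<in>A. eval_qpoly x (f a))"
  by (induction A rule: infinite_finite_induct) (auto simp: eval_mult)

definition qvar :: "'i \<Rightarrow> 'i qpoly" where "qvar i = Poly_Mapping.single (Poly_Mapping.single i 1) 1"
definition qconst :: "rat \<Rightarrow> 'i qpoly" where "qconst c = Poly_Mapping.single 0 c"

lemma eval_var[simp]: "eval_qpoly x (qvar i) = x i" by (simp add: qvar_def)
lemma eval_const[simp]: "eval_qpoly x (qconst c) = of_rat c" by (simp add: qconst_def)

definition qvars :: "'i qpoly \<Rightarrow> 'i set" where
  "qvars P = (\<Union>m\<in>Poly_Mapping.keys P. Poly_Mapping.keys m)"

lemma finite_vars[simp]: "finite (qvars P)" by (simp add: qvars_def)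

lemma qvars_add: "qvars (P + Q) \<subseteq> qvars P \<union> qvars Q"
  using keys_add[of P Q] by (auto simp: qvars_def)

lemma qvars_uminus[simp]: "qvars (- P) = qvars P"
  by (simp add: qvars_def keys_def)

lemma qvars_diff: "qvars (P - Q) \<subseteq> qvars P \<union> qvars Q"
  using qvars_add[of P "-Q"] by simp

lemma qvars_mult: "qvars (P * Q) \<subseteq> qvars P \<union> qvars Q"
proof
  fix i assume "i \<in> qvars (P * Q)"
  then obtain k where k: "k \<in> Poly_Mapping.keys (P*Q)" "i \<in> Poly_Mapping.keys k" by (auto simp: qvars_def)
  then obtain a b where "k = a + b" "a \<in> Poly_Mapping.keys P" "b \<in> Poly_Mapping.keys Q"
    using keys_mult[of P Q] by blast
  with k show "i \<in> qvars P \<union> qvars Q" using keys_add[of a b] by (auto simp: qvars_def)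
qed

lemma qvars_one[simp]: "qvars 1 = {}" by (simp add: qvars_def)
lemma qvars_zero[simp]: "qvars 0 = {}" by (simp add: qvars_def)

lemma qvars_power: "qvars (P ^ k) \<subseteq> qvars P"
  by (induction k) (use qvars_mult in fastforce)+

lemma qvars_sum: "qvars (sum f A) \<subseteq> (\<Union>a\<in>A. qvars (f a))"
  by (induction A rule: infinite_finite_induct) (use qvars_add in fastforce)+

lemma qvars_prod: "qvars (prod f A) \<subseteq> (\<Union>a\<in>A. qvars (f a))"
  by (induction A rule: infinite_finite_induct) (use qvars_mult in fastforce)+

lemma qvars_var[simp]: "qvars (qvar i) = {i}" by (simp add: qvars_def qvar_def)
lemma qvars_const: "qvars (qconst c) = {}" by (simp add: qvars_def qconst_def)
lemma qvars_single: "qvars (Poly_Mapping.single m c) \<subseteq> Poly_Mapping.keys m" by (simp add: qvars_def)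

lemma eval_cong:
  assumes "\<And>i. i \<in> qvars P \<Longrightarrow> x i = y i"
  shows "eval_qpoly x P = eval_qpoly y P"
  unfolding eval_qpoly_def
proof (rule sum.cong[OF refl])
  fix m assume m: "m \<in> Poly_Mapping.keys P"
  have "(\<Prod>i\<in>Poly_Mapping.keys m. x i ^ Poly_Mapping.lookup m i) = (\<Prod>i\<in>Poly_Mapping.keys m. y i ^ Poly_Mapping.lookup m i)"
    by (rule prod.cong[OF refl]) (metis assms m UN_I qvars_def)
  then show "of_rat (Poly_Mapping.lookup P m) * (\<Prod>i\<in>Poly_Mapping.keys m. x i ^ Poly_Mapping.lookup m i) =
         of_rat (Poly_Mapping.lookup P m) * (\<Prod>i\<in>Poly_Mapping.keys m. y i ^ Poly_Mapping.lookup m i)" by simp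
qed

lemma of_real_of_rat': "of_real (of_rat q :: real) = (of_rat q :: 'a::real_field)"
  by (cases q) (simp add: of_rat_rat of_real_divide)

lemma eval_of_real: "eval_qpoly (\<lambda>i. of_real (x i) :: complex) P = of_real (eval_qpoly x P)"
  by (simp add: eval_qpoly_def of_real_sum of_real_mult of_real_prod of_real_power of_real_of_rat')

definition qsubst :: "('i \<Rightarrow> 'j qpoly) \<Rightarrow> 'i qpoly \<Rightarrow> 'j qpoly" where
  "qsubst \<sigma> P = (\<Sum>m\<in>Poly_Mapping.keys P. qconst (Poly_Mapping.lookup P m) *
      (\<Prod>i\<in>Poly_Mapping.keys m. \<sigma> i ^ Poly_Mapping.lookup m i))"

lemma eval_qsubst: "eval_qpoly x (qsubst \<sigma> P) = eval_qpoly (\<lambda>i. eval_qpoly x (\<sigma> i)) P"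
  unfolding qsubst_def eval_sum eval_mult eval_prod eval_power eval_const
  by (simp add: eval_qpoly_def)

lemma qvars_subst: "qvars (qsubst \<sigma> P) \<subseteq> (\<Union>i\<in>qvars P. qvars (\<sigma> i))"
proof -
  have "qvars (qsubst \<sigma> P) \<subseteq> (\<Union>m\<in>Poly_Mapping.keys P. qvars (qconst (Poly_Mapping.lookup P m) *
      (\<Prod>i\<in>Poly_Mapping.keys m. \<sigma> i ^ Poly_Mapping.lookup m i)))"
    unfolding qsubst_def by (rule qvars_sum)
  also have "\<dots> \<subseteq> (\<Union>i\<in>qvars P. qvars (\<sigma> i))"
  proof (rule UN_least)
    fix m assume m: "m \<in> Poly_Mapping.keys P"
    have "qvars (qconst (Poly_Mapping.lookup P m) * (\<Prod>i\<in>Poly_Mapping.keys m. \<sigma> i ^ Poly_Mapping.lookup m i))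
       \<subseteq> qvars (\<Prod>i\<in>Poly_Mapping.keys m. \<sigma> i ^ Poly_Mapping.lookup m i)"
      using qvars_mult qvars_const by fastforce
    also have "\<dots> \<subseteq> (\<Union>i\<in>Poly_Mapping.keys m. qvars (\<sigma> i ^ Poly_Mapping.lookup m i))" by (rule qvars_prod)
    also have "\<dots> \<subseteq> (\<Union>i\<in>Poly_Mapping.keys m. qvars (\<sigma> i))" using qvars_power by fastforce
    also have "\<dots> \<subseteq> (\<Union>i\<in>qvars P. qvars (\<sigma> i))" using m by (auto simp: qvars_def)
    finally show "qvars (qconst (Poly_Mapping.lookup P m) * (\<Prod>i\<in>Poly_Mapping.keys m. \<sigma> i ^ Poly_Mapping.lookup m i))
       \<subseteq> (\<Union>i\<in>qvars P. qvars (\<sigma> i))" .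
  qed
  finally show ?thesis .
qed

lemma alg_indep_zero:
  assumes "alg_indep x I" "qvars P \<subseteq> I" "eval_qpoly x P = 0"
  shows "P = 0"
  using assms unfolding alg_indep_def qvars_def by blast

lemma subfield_UNIV: "is_subfield UNIV" by (simp add: is_subfield_def)

lemma subfield_gen: "is_subfield (field_gen S)"
  unfolding field_gen_def is_subfield_def by blast

lemma gen_sub: "S \<subseteq> field_gen S" unfolding field_gen_def by blast

lemma gen_least: "is_subfield F \<Longrightarrow> S \<subseteq> F \<Longrightarrow> field_gen S \<subseteq> F"
  unfolding field_gen_def by blast

lemma gen_mono: "S \<subseteq> T \<Longrightarrow> field_gen S \<subseteq> field_gen T"
  by (meson gen_least gen_sub order_trans subfield_gen)

context fixes F assumes F: "is_subfield F" begin

lemma sf0: "0 \<in> F" and sf1: "1 \<in> F" using F by (auto simp: is_subfield_def)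
lemma sf_add: "a \<in> F \<Longrightarrow> b \<in> F \<Longrightarrow> a + b \<in> F" using F by (auto simp: is_subfield_def)
lemma sf_diff: "a \<in> F \<Longrightarrow> b \<in> F \<Longrightarrow> a - b \<in> F" using F by (auto simp: is_subfield_def)
lemma sf_mult: "a \<in> F \<Longrightarrow> b \<in> F \<Longrightarrow> a * b \<in> F" using F by (auto simp: is_subfield_def)
lemma sf_inv: "a \<in> F \<Longrightarrow> inverse a \<in> F" using F by (auto simp: is_subfield_def)
lemma sf_div: "a \<in> F \<Longrightarrow> b \<in> F \<Longrightarrow> a / b \<in> F" by (simp add: divide_inverse sf_inv sf_mult)
lemma sf_uminus: "a \<in> F \<Longrightarrow> - a \<in> F" using sf_diff[OF sf0] by fastforce
lemma sf_power: "a \<in> F \<Longrightarrow> a ^ k \<in> F" by (induction k) (auto simp: sf1 sf_mult)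
lemma sf_sum: "(\<And>x. x \<in> A \<Longrightarrow> f x \<in> F) \<Longrightarrow> sum f A \<in> F"
  by (induction A rule: infinite_finite_induct) (auto simp: sf0 sf_add)
lemma sf_prod: "(\<And>x. x \<in> A \<Longrightarrow> f x \<in> F) \<Longrightarrow> prod f A \<in> F"
  by (induction A rule: infinite_finite_induct) (auto simp: sf1 sf_mult)
lemma sf_of_nat: "of_nat k \<in> F" by (induction k) (auto simp: sf0 sf1 sf_add)
lemma sf_of_int: "of_int k \<in> F"
proof (cases "k \<ge> 0")
  case True then show ?thesis using sf_of_nat[of "nat k"] by simp
next
  case False then show ?thesis using sf_uminus[OF sf_of_nat[of "nat (-k)"]] by simp
qed
lemma sf_of_rat: "of_rat q \<in> F"
  by (cases q) (simp add: of_rat_rat sf_div sf_of_int)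
lemma sf_eval: "(\<And>i. i \<in> qvars P \<Longrightarrow> x i \<in> F) \<Longrightarrow> eval_qpoly x P \<in> F"
  unfolding eval_qpoly_def
  by (rule sf_sum, rule sf_mult[OF sf_of_rat], rule sf_prod, rule sf_power) (auto simp: qvars_def)
end

lemma eval_in_gen: "qvars P \<subseteq> S \<Longrightarrow> eval_qpoly (\<lambda>z. z) P \<in> field_gen S"
  using sf_eval[OF subfield_gen, of P "\<lambda>z. z" S] gen_sub[of S] by blast

definition fracs :: "complex set \<Rightarrow> complex set" where
  "fracs S = {eval_qpoly (\<lambda>z. z) P / eval_qpoly (\<lambda>z. z) Q | P Q.
       qvars P \<subseteq> S \<and> qvars Q \<subseteq> S \<and> eval_qpoly (\<lambda>z. z) Q \<noteq> 0}"

lemma fracs_subfield: "is_subfield (fracs S)"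
proof -
  let ?e = "eval_qpoly (\<lambda>z::complex. z)"
  have 0: "0 \<in> fracs S" unfolding fracs_def
    by (rule CollectI, rule exI[of _ 0], rule exI[of _ 1]) simp
  have 1: "1 \<in> fracs S" unfolding fracs_def
    by (rule CollectI, rule exI[of _ 1], rule exI[of _ 1]) simp
  have ops: "a + b \<in> fracs S \<and> a - b \<in> fracs S \<and> a * b \<in> fracs S" if "a \<in> fracs S" "b \<in> fracs S" for a b
  proof -
    from that obtain P1 Q1 P2 Q2 where a: "a = ?e P1 / ?e Q1" "qvars P1 \<subseteq> S" "qvars Q1 \<subseteq> S" "?e Q1 \<noteq> 0"
      and b: "b = ?e P2 / ?e Q2" "qvars P2 \<subseteq> S" "qvars Q2 \<subseteq> S" "?e Q2 \<noteq> 0"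
      unfolding fracs_def by blast
    have vQ: "qvars (Q1 * Q2) \<subseteq> S" using qvars_mult[of Q1 Q2] a b by blast
    have nz: "?e (Q1 * Q2) \<noteq> 0" using a b by (simp add: eval_mult)
    have v1: "qvars (P1 * Q2 + P2 * Q1) \<subseteq> S" using qvars_add[of "P1*Q2" "P2*Q1"] qvars_mult[of P1 Q2] qvars_mult[of P2 Q1] a b by blast
    have v2: "qvars (P1 * Q2 - P2 * Q1) \<subseteq> S" using qvars_diff[of "P1*Q2" "P2*Q1"] qvars_mult[of P1 Q2] qvars_mult[of P2 Q1] a b by blast
    have v3: "qvars (P1 * P2) \<subseteq> S" using qvars_mult[of P1 P2] a b by blast
    have "a + b = ?e (P1 * Q2 + P2 * Q1) / ?e (Q1 * Q2)"
      unfolding a(1) b(1) using a(4) b(4) by (simp add: eval_add eval_mult field_simps)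
    moreover have "a - b = ?e (P1 * Q2 - P2 * Q1) / ?e (Q1 * Q2)"
      unfolding a(1) b(1) using a(4) b(4) by (simp add: eval_diff eval_mult field_simps)
    moreover have "a * b = ?e (P1 * P2) / ?e (Q1 * Q2)"
      unfolding a(1) b(1) using a(4) b(4) by (simp add: eval_mult field_simps)
    ultimately show ?thesis unfolding fracs_def using vQ nz v1 v2 v3 by blast
  qed
  have inv: "inverse a \<in> fracs S" if "a \<in> fracs S" for a
  proof -
    from that obtain P1 Q1 where a: "a = ?e P1 / ?e Q1" "qvars P1 \<subseteq> S" "qvars Q1 \<subseteq> S" "?e Q1 \<noteq> 0"
      unfolding fracs_def by blast
    show ?thesis
    proof (cases "?e P1 = 0")
      case True then show ?thesis using a 0 by simp
    next
      case False
      have "inverse a = ?e Q1 / ?e P1" using a by simp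
      then show ?thesis unfolding fracs_def using a False by blast
    qed
  qed
  show ?thesis unfolding is_subfield_def using 0 1 ops inv by blast
qed

lemma gen_fracs: "field_gen S \<subseteq> fracs S"
proof (rule gen_least[OF fracs_subfield])
  show "S \<subseteq> fracs S"
  proof
    fix s assume "s \<in> S"
    then show "s \<in> fracs S" unfolding fracs_def
      by (intro CollectI exI[of _ "qvar s"] exI[of _ 1]) simp
  qed
qed

lemma pigeon_dep:
  fixes v :: "'j \<Rightarrow> 'm \<Rightarrow> rat"
  assumes "finite A" "finite J" "card J > card A" "\<And>j a. j \<in> J \<Longrightarrow> a \<notin> A \<Longrightarrow> v j a = 0"
  shows "\<exists>c. (\<exists>j\<in>J. c j \<noteq> 0) \<and> (\<forall>a. (\<Sum>j\<in>J. c j * v j a) = 0)"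
  using assms
proof (induction A arbitrary: J v rule: finite_induct)
  case empty
  then obtain j0 where "j0 \<in> J" by (metis card.empty card_gt_0_iff ex_in_conv)
  then show ?case using empty by (intro exI[of _ "\<lambda>_. 1"]) auto
next
  case (insert a A)
  show ?case
  proof (cases "\<forall>j\<in>J. v j a = 0")
    case True
    have h: "v j b = 0" if "j \<in> J" "b \<notin> A" for j b
      using True insert.prems(3) that by (cases "b = a") auto
    have "\<exists>c. (\<exists>j\<in>J. c j \<noteq> 0) \<and> (\<forall>a. (\<Sum>j\<in>J. c j * v j a) = 0)"
      by (rule insert.IH) (use insert h in \<open>auto\<close>)
    then show ?thesis .
  next
    case False
    then obtain k where k: "k \<in> J" "v k a \<noteq> 0" by blast
    define w where "w j b = v j b - (v j a / v k a) * v k b" for j b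
    have cJ: "card (J - {k}) > card A" using insert k by auto
    have "\<exists>c. (\<exists>j\<in>J-{k}. c j \<noteq> 0) \<and> (\<forall>b. (\<Sum>j\<in>J-{k}. c j * w j b) = 0)"
    proof (rule insert.IH)
      show "finite (J - {k})" using insert by auto
      show "card A < card (J - {k})" by (rule cJ)
      fix j b assume "j \<in> J - {k}" "b \<notin> A"
      then show "w j b = 0" using insert k by (cases "b = a") (auto simp: w_def)
    qed
    then obtain c where c: "\<exists>j\<in>J-{k}. c j \<noteq> 0" "\<And>b. (\<Sum>j\<in>J-{k}. c j * w j b) = 0" by blast
    define c' where "c' j = (if j = k then - (\<Sum>i\<in>J-{k}. c i * (v i a / v k a)) else c j)" for j
    have "(\<Sum>j\<in>J. c' j * v j b) = 0" for b
    proof -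
      have "(\<Sum>j\<in>J. c' j * v j b) = c' k * v k b + (\<Sum>j\<in>J-{k}. c' j * v j b)"
        using insert k by (simp add: sum.remove)
      also have "(\<Sum>j\<in>J-{k}. c' j * v j b) = (\<Sum>j\<in>J-{k}. c j * w j b + c j * (v j a / v k a) * v k b)"
        by (rule sum.cong) (auto simp: c'_def w_def algebra_simps)
      also have "\<dots> = (\<Sum>j\<in>J-{k}. c j * w j b) + (\<Sum>j\<in>J-{k}. c j * (v j a / v k a)) * v k b"
        by (simp add: sum.distrib sum_distrib_right)
      finally show ?thesis using c(2)[of b] by (simp add: c'_def)
    qed
    moreover have "\<exists>j\<in>J. c' j \<noteq> 0" using c(1) by (auto simp: c'_def)
    ultimately show ?thesis by blast
  qed
qed

definition msize :: "('i \<Rightarrow>\<^sub>0 nat) \<Rightarrow> nat" where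
  "msize m = sum (Poly_Mapping.lookup m) (Poly_Mapping.keys m)"

lemma msize_superset: "finite A \<Longrightarrow> Poly_Mapping.keys m \<subseteq> A \<Longrightarrow> msize m = sum (Poly_Mapping.lookup m) A"
  unfolding msize_def by (rule sum.mono_neutral_left) (auto simp: in_keys_iff)

lemma msize_add: "msize (a + b) = msize a + msize b"
proof -
  let ?A = "Poly_Mapping.keys a \<union> Poly_Mapping.keys b"
  have "msize (a+b) = sum (Poly_Mapping.lookup (a+b)) ?A" by (rule msize_superset) (auto simp: keys_add)
  also have "\<dots> = sum (Poly_Mapping.lookup a) ?A + sum (Poly_Mapping.lookup b) ?A" by (simp add: lookup_add sum.distrib)
  also have "\<dots> = msize a + msize b" using msize_superset[of ?A a] msize_superset[of ?A b] by simp
  finally show ?thesis .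
qed

lemma lookup_le_msize: "Poly_Mapping.lookup m i \<le> msize m"
proof (cases "i \<in> Poly_Mapping.keys m")
  case True then show ?thesis unfolding msize_def by (rule member_le_sum) auto
qed (simp add: in_keys_iff)

definition tdeg :: "'i qpoly \<Rightarrow> nat" where
  "tdeg P = Max (insert 0 (msize ` Poly_Mapping.keys P))"

lemma tdeg_le_iff: "tdeg P \<le> d \<longleftrightarrow> (\<forall>m\<in>Poly_Mapping.keys P. msize m \<le> d)"
  unfolding tdeg_def by simp

lemma msize_le_tdeg: "m \<in> Poly_Mapping.keys P \<Longrightarrow> msize m \<le> tdeg P"
  using tdeg_le_iff by blast

lemma tdeg_mult: "tdeg (P * Q) \<le> tdeg P + tdeg Q"
  unfolding tdeg_le_iff
proof
  fix k assume "k \<in> Poly_Mapping.keys (P * Q)"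
  then obtain a b where "k = a + b" "a \<in> Poly_Mapping.keys P" "b \<in> Poly_Mapping.keys Q"
    using keys_mult[of P Q] by blast
  then show "msize k \<le> tdeg P + tdeg Q" by (simp add: msize_add add_mono msize_le_tdeg)
qed

lemma tdeg_one[simp]: "tdeg (1 :: 'i qpoly) = 0"
  by (simp add: tdeg_def msize_def)

lemma tdeg_power: "tdeg (P ^ k) \<le> k * tdeg P"
proof (induction k)
  case (Suc k)
  have "tdeg (P ^ Suc k) \<le> tdeg P + tdeg (P ^ k)" using tdeg_mult[of P "P^k"] by simp
  also have "\<dots> \<le> Suc k * tdeg P" using Suc by simp
  finally show ?case .
qed simp

lemma tdeg_prod: "tdeg (prod f A) \<le> (\<Sum>a\<in>A. tdeg (f a))"
proof (induction A rule: infinite_finite_induct)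
  case (insert a A)
  have "tdeg (prod f (insert a A)) \<le> tdeg (f a) + tdeg (prod f A)"
    using insert tdeg_mult[of "f a" "prod f A"] by simp
  also have "\<dots> \<le> (\<Sum>a\<in>insert a A. tdeg (f a))" using insert by simp
  finally show ?case .
qed simp_all

lemma qmono_sum: "qmono x (sum h A) = (\<Prod>a\<in>A. qmono x (h a))"
  by (induction A rule: infinite_finite_induct) (auto simp: qmono_add)

lemma card_indep_le:
  assumes S: "finite S" and Bf: "finite B" and BS: "B \<subseteq> field_gen S" and ind: "alg_indep_set B"
  shows "card B \<le> card S"
proof (rule ccontr)
  assume "\<not> card B \<le> card S"
  then have km: "card S < card B" by simp
  define m where "m = card B"
  define k where "k = card S"
  let ?e = "eval_qpoly (\<lambda>z::complex. z)"
  have "\<forall>b\<in>B. \<exists>PQ. qvars (fst PQ) \<subseteq> S \<and> qvars (snd PQ) \<subseteq> S \<and> ?e (snd PQ) \<noteq> 0 \<and> b = ?e (fst PQ) / ?e (snd PQ)"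
  proof
    fix b assume "b \<in> B"
    then have "b \<in> fracs S" using BS gen_fracs by blast
    then obtain P Q where "qvars P \<subseteq> S" "qvars Q \<subseteq> S" "?e Q \<noteq> 0" "b = ?e P / ?e Q" unfolding fracs_def by blast
    then show "\<exists>PQ. qvars (fst PQ) \<subseteq> S \<and> qvars (snd PQ) \<subseteq> S \<and> ?e (snd PQ) \<noteq> 0 \<and> b = ?e (fst PQ) / ?e (snd PQ)"
      by (intro exI[of _ "(P,Q)"]) auto
  qed
  then obtain PQ where PQ: "\<And>b. b \<in> B \<Longrightarrow> qvars (fst (PQ b)) \<subseteq> S \<and> qvars (snd (PQ b)) \<subseteq> S \<and>
      ?e (snd (PQ b)) \<noteq> 0 \<and> b = ?e (fst (PQ b)) / ?e (snd (PQ b))" by metis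
  define g where "g = (\<Prod>b\<in>B. snd (PQ b))"
  define f where "f b = fst (PQ b) * (\<Prod>b'\<in>B-{b}. snd (PQ b'))" for b
  have eg: "?e g \<noteq> 0" unfolding g_def eval_prod using PQ Bf by simp
  have ef: "?e (f b) = b * ?e g" if "b \<in> B" for b
  proof -
    have "?e g = ?e (snd (PQ b)) * (\<Prod>b'\<in>B-{b}. ?e (snd (PQ b')))"
      unfolding g_def eval_prod using that Bf by (simp add: prod.remove)
    moreover have "b * ?e (snd (PQ b)) = ?e (fst (PQ b))"
    proof -
      from PQ[OF that] have "?e (snd (PQ b)) \<noteq> 0" "b = ?e (fst (PQ b)) / ?e (snd (PQ b))" by auto
      then show ?thesis by (metis divide_eq_eq)
    qed
    ultimately show ?thesis unfolding f_def eval_mult eval_prod by (simp add: ac_simps)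
  qed
  have vg: "qvars g \<subseteq> S" unfolding g_def using qvars_prod[of "\<lambda>b. snd (PQ b)" B] PQ by blast
  have vf: "qvars (f b) \<subseteq> S" if "b \<in> B" for b
  proof -
    have "qvars (\<Prod>b'\<in>B-{b}. snd (PQ b')) \<subseteq> S" using qvars_prod[of "\<lambda>b. snd (PQ b)" "B-{b}"] PQ by blast
    then show ?thesis unfolding f_def using qvars_mult[of "fst (PQ b)" "\<Prod>b'\<in>B-{b}. snd (PQ b')"] PQ[OF that] by blast
  qed
  define Dg where "Dg = tdeg g + (\<Sum>b\<in>B. tdeg (f b))"
  have Dg1: "tdeg g \<le> Dg" by (simp add: Dg_def)
  have Dg2: "tdeg (f b) \<le> Dg" if "b \<in> B" for b
    unfolding Dg_def using member_le_sum[OF that, of "\<lambda>b. tdeg (f b)"] Bf by simp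
  define M where "M = (m * Dg + 1) ^ k"
  define N where "N = m * M * Dg"
  define Alph where "Alph = PiE B (\<lambda>_. {..M})"
  define R where "R \<alpha> = (\<Prod>b\<in>B. f b ^ \<alpha> b) * g ^ (m * M - (\<Sum>b\<in>B. \<alpha> b))" for \<alpha>
  have sumal: "(\<Sum>b\<in>B. \<alpha> b) \<le> m * M" if "\<alpha> \<in> Alph" for \<alpha>
    using sum_bounded_above[of B \<alpha> M] that unfolding Alph_def m_def by auto
  have tdR: "tdeg (R \<alpha>) \<le> N" if "\<alpha> \<in> Alph" for \<alpha>
  proof -
    have "tdeg (R \<alpha>) \<le> tdeg (\<Prod>b\<in>B. f b ^ \<alpha> b) + tdeg (g ^ (m * M - (\<Sum>b\<in>B. \<alpha> b)))"
      unfolding R_def by (rule tdeg_mult)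
    also have "tdeg (\<Prod>b\<in>B. f b ^ \<alpha> b) \<le> (\<Sum>b\<in>B. tdeg (f b ^ \<alpha> b))" by (rule tdeg_prod)
    also have "\<dots> \<le> (\<Sum>b\<in>B. \<alpha> b * Dg)"
      by (rule sum_mono) (meson Dg2 le_trans mult_le_mono2 tdeg_power)
    also have "tdeg (g ^ (m * M - (\<Sum>b\<in>B. \<alpha> b))) \<le> (m * M - (\<Sum>b\<in>B. \<alpha> b)) * Dg"
      by (meson Dg1 le_trans mult_le_mono2 tdeg_power)
    also have "(\<Sum>b\<in>B. \<alpha> b * Dg) + (m * M - (\<Sum>b\<in>B. \<alpha> b)) * Dg = N"
      using sumal[OF that] unfolding N_def by (simp add: sum_distrib_right[symmetric] add_mult_distrib[symmetric])
    finally show ?thesis by simp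
  qed
  have vR: "qvars (R \<alpha>) \<subseteq> S" if "\<alpha> \<in> Alph" for \<alpha>
  proof -
    have "qvars (f b ^ \<alpha> b) \<subseteq> S" if "b \<in> B" for b using qvars_power[of "f b" "\<alpha> b"] vf[OF that] by blast
    then have "qvars (\<Prod>b\<in>B. f b ^ \<alpha> b) \<subseteq> S"
      using qvars_prod[of "\<lambda>b. f b ^ \<alpha> b" B] by blast
    moreover have "qvars (g ^ (m * M - (\<Sum>b\<in>B. \<alpha> b))) \<subseteq> S" using qvars_power[of g] vg by blast
    ultimately show ?thesis unfolding R_def using qvars_mult[of "\<Prod>b\<in>B. f b ^ \<alpha> b" "g ^ (m * M - (\<Sum>b\<in>B. \<alpha> b))"] by blast
  qed
  define Mon where "Mon = {mo. Poly_Mapping.keys mo \<subseteq> S \<and> (\<forall>i. Poly_Mapping.lookup mo i \<le> N)}"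
  have keysR: "Poly_Mapping.keys (R \<alpha>) \<subseteq> Mon" if "\<alpha> \<in> Alph" for \<alpha>
  proof
    fix mo assume mo: "mo \<in> Poly_Mapping.keys (R \<alpha>)"
    have "Poly_Mapping.keys mo \<subseteq> S" using vR[OF that] mo by (auto simp: qvars_def)
    moreover have "Poly_Mapping.lookup mo i \<le> N" for i
      using lookup_le_msize[of mo i] msize_le_tdeg[OF mo] tdR[OF that] by linarith
    ultimately show "mo \<in> Mon" by (simp add: Mon_def)
  qed
  have injMon: "inj_on (\<lambda>mo. restrict (Poly_Mapping.lookup mo) S) Mon"
  proof (rule inj_onI)
    fix a b assume ab: "a \<in> Mon" "b \<in> Mon" "restrict (Poly_Mapping.lookup a) S = restrict (Poly_Mapping.lookup b) S"
    show "a = b"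
    proof (rule poly_mapping_eqI)
      fix i show "Poly_Mapping.lookup a i = Poly_Mapping.lookup b i"
      proof (cases "i \<in> S")
        case True then show ?thesis using ab(3) by (metis restrict_apply')
      next
        case False
        then have "i \<notin> Poly_Mapping.keys a" "i \<notin> Poly_Mapping.keys b" using ab(1,2) by (auto simp: Mon_def)
        then show ?thesis by (simp add: in_keys_iff)
      qed
    qed
  qed
  have imMon: "(\<lambda>mo. restrict (Poly_Mapping.lookup mo) S) ` Mon \<subseteq> PiE S (\<lambda>_. {..N})"
    by (auto simp: Mon_def)
  have finPi: "finite (PiE S (\<lambda>_. {..N}))" by (rule finite_PiE) (use S in auto)
  have cardMon: "card Mon \<le> (N+1)^k"
  proof -
    have "card Mon \<le> card (PiE S (\<lambda>_. {..N}))" by (rule card_inj_on_le[OF injMon imMon finPi])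
    also have "\<dots> = (N+1)^k" using S by (simp add: card_PiE k_def)
    finally show ?thesis .
  qed
  have finMon: "finite Mon" using inj_on_finite[OF injMon imMon finPi] .
  have finAlph: "finite Alph" unfolding Alph_def using Bf by (simp add: finite_PiE)
  have cardAlph: "card Alph = (M+1)^m" unfolding Alph_def m_def using Bf by (simp add: card_PiE)
  have ineq: "(N+1)^k < (M+1)^m"
  proof -
    have "N + 1 \<le> (m * Dg + 1) * (M + 1)" unfolding N_def by (simp add: algebra_simps)
    then have "(N+1)^k \<le> ((m * Dg + 1) * (M + 1))^k" by (rule power_mono) simp
    also have "\<dots> = (m * Dg + 1)^k * (M + 1)^k" by (rule power_mult_distrib)
    also have "\<dots> = M * (M+1)^k" by (simp only: M_def)
    also have "\<dots> < (M+1)^(Suc k)" by simp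
    also have "\<dots> \<le> (M+1)^m" by (rule power_increasing) (use km in \<open>auto simp: k_def m_def\<close>)
    finally show ?thesis .
  qed
  obtain c where c: "\<exists>\<alpha>\<in>Alph. c \<alpha> \<noteq> 0" "\<And>mo. (\<Sum>\<alpha>\<in>Alph. c \<alpha> * Poly_Mapping.lookup (R \<alpha>) mo) = 0"
  proof -
    have cc: "card Mon < card Alph" using cardMon cardAlph ineq by linarith
    have sup: "Poly_Mapping.lookup (R j) mo = 0" if "j \<in> Alph" "mo \<notin> Mon" for j mo
      using keysR[OF that(1)] that(2) by (meson in_keys_iff subsetD)
    show ?thesis using pigeon_dep[of Mon Alph "\<lambda>\<alpha> mo. Poly_Mapping.lookup (R \<alpha>) mo", OF finMon finAlph cc sup]
      that by blast
  qed
  have eR: "?e (R \<alpha>) = ?e g ^ (m * M) * (\<Prod>b\<in>B. b ^ \<alpha> b)" if "\<alpha> \<in> Alph" for \<alpha>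
  proof -
    have "?e (R \<alpha>) = (\<Prod>b\<in>B. (b * ?e g) ^ \<alpha> b) * ?e g ^ (m * M - (\<Sum>b\<in>B. \<alpha> b))"
      unfolding R_def eval_mult eval_prod eval_power using ef by simp
    also have "\<dots> = (\<Prod>b\<in>B. b ^ \<alpha> b) * (?e g ^ (\<Sum>b\<in>B. \<alpha> b) * ?e g ^ (m * M - (\<Sum>b\<in>B. \<alpha> b)))"
      by (simp add: power_mult_distrib prod.distrib power_sum)
    also have "?e g ^ (\<Sum>b\<in>B. \<alpha> b) * ?e g ^ (m * M - (\<Sum>b\<in>B. \<alpha> b)) = ?e g ^ (m * M)"
      using sumal[OF that] by (simp add: power_add[symmetric])
    finally show ?thesis by simp
  qed
  have "(\<Sum>\<alpha>\<in>Alph. of_rat (c \<alpha>) * ?e (R \<alpha>)) = (\<Sum>\<alpha>\<in>Alph. \<Sum>mo\<in>Mon. of_rat (c \<alpha>) * (of_rat (Poly_Mapping.lookup (R \<alpha>) mo) * qmono (\<lambda>z. z) mo))"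
    by (rule sum.cong[OF refl]) (simp add: eval_superset[OF finMon keysR] sum_distrib_left)
  also have "\<dots> = (\<Sum>mo\<in>Mon. of_rat (\<Sum>\<alpha>\<in>Alph. c \<alpha> * Poly_Mapping.lookup (R \<alpha>) mo) * qmono (\<lambda>z. z) mo)"
    by (subst sum.swap) (simp add: of_rat_sum of_rat_mult sum_distrib_right mult.assoc)
  also have "\<dots> = 0" using c(2) by simp
  finally have "(\<Sum>\<alpha>\<in>Alph. of_rat (c \<alpha>) * ?e (R \<alpha>)) = 0" .
  then have "?e g ^ (m * M) * (\<Sum>\<alpha>\<in>Alph. of_rat (c \<alpha>) * (\<Prod>b\<in>B. b ^ \<alpha> b)) = 0"
    by (simp add: eR sum_distrib_left ac_simps)
  then have rel: "(\<Sum>\<alpha>\<in>Alph. of_rat (c \<alpha>) * (\<Prod>b\<in>B. b ^ \<alpha> b)) = 0" using eg by simp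
  define mon where "mon \<alpha> = (\<Sum>b\<in>B. Poly_Mapping.single b (\<alpha> b))" for \<alpha> :: "complex \<Rightarrow> nat"
  have lmon: "Poly_Mapping.lookup (mon \<alpha>) b = (if b \<in> B then \<alpha> b else 0)" for \<alpha> b
    unfolding mon_def lookup_sum by (simp add: lookup_single when_def Bf)
  have injmon: "inj_on mon Alph"
  proof (rule inj_onI)
    fix a b assume ab: "a \<in> Alph" "b \<in> Alph" "mon a = mon b"
    show "a = b"
      by (rule PiE_ext[OF ab(1)[unfolded Alph_def] ab(2)[unfolded Alph_def]])
         (metis ab(3) lmon)
  qed
  define T where "T = (\<Sum>\<alpha>\<in>Alph. Poly_Mapping.single (mon \<alpha>) (c \<alpha>))"
  have "?e T = (\<Sum>\<alpha>\<in>Alph. of_rat (c \<alpha>) * qmono (\<lambda>z. z) (mon \<alpha>))" unfolding T_def eval_sum by simp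
  also have "\<dots> = (\<Sum>\<alpha>\<in>Alph. of_rat (c \<alpha>) * (\<Prod>b\<in>B. b ^ \<alpha> b))"
    unfolding mon_def qmono_sum by simp
  finally have eT: "?e T = 0" using rel by simp
  have vT: "qvars T \<subseteq> B"
  proof -
    have "qvars T \<subseteq> (\<Union>\<alpha>\<in>Alph. qvars (Poly_Mapping.single (mon \<alpha>) (c \<alpha>)))" unfolding T_def by (rule qvars_sum)
    also have "\<dots> \<subseteq> (\<Union>\<alpha>\<in>Alph. Poly_Mapping.keys (mon \<alpha>))" using qvars_single by fast
    also have "\<dots> \<subseteq> B" using lmon by (auto simp: in_keys_iff split: if_splits)
    finally show ?thesis .
  qed
  obtain a0 where a0: "a0 \<in> Alph" "c a0 \<noteq> 0" using c(1) by blast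
  have "Poly_Mapping.lookup T (mon a0) = (\<Sum>\<alpha>\<in>Alph. if mon \<alpha> = mon a0 then c \<alpha> else 0)"
    unfolding T_def lookup_sum by (simp add: lookup_single when_def)
  also have "\<dots> = (\<Sum>\<alpha>\<in>Alph. if \<alpha> = a0 then c \<alpha> else 0)"
    by (rule sum.cong[OF refl]) (metis a0(1) injmon inj_onD)
  also have "\<dots> = c a0" using a0 finAlph by simp
  finally have "T \<noteq> 0" using a0 by auto
  moreover have "T = 0" using alg_indep_zero[OF ind[unfolded alg_indep_set_def] vT eT] .
  ultimately show False by contradiction
qed

abbreviation CF :: "complex ring" where
  "CF \<equiv> \<lparr>carrier = UNIV, mult = (*), one = 1, zero = 0, add = (+)\<rparr>"

lemma CF_cring: "cring CF"
proof (rule cringI)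
  show "abelian_group CF"
    by (rule abelian_groupI) (auto intro: left_minus)
  show "Group.comm_monoid CF"
    by (simp add: Group.monoid.intro monoid.monoid_comm_monoidI)
qed (auto simp: distrib_right)

lemma CF_field: "field CF"
proof -
  have U: "Units CF = carrier CF - {\<zero>\<^bsub>CF\<^esub>}"
  proof
    show "Units CF \<subseteq> carrier CF - {\<zero>\<^bsub>CF\<^esub>}" by (auto simp: Units_def)
    show "carrier CF - {\<zero>\<^bsub>CF\<^esub>} \<subseteq> Units CF"
    proof
      fix x assume "x \<in> carrier CF - {\<zero>\<^bsub>CF\<^esub>}"
      then have "x \<noteq> 0" by simp
      then show "x \<in> Units CF" unfolding Units_def by (auto intro!: exI[of _ "inverse x"])
    qed
  qed
  show ?thesis
    unfolding field_def field_axioms_def domain_def domain_axioms_def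
    using CF_cring U by auto
qed

lemma CF_domain: "domain CF" using CF_field field_def by blast

interpretation CFi: cring CF by (rule CF_cring)

lemma CF_pow[simp]: "x [^]\<^bsub>CF\<^esub> (n::nat) = x ^ n"
  by (induct n) simp_all

lemma CF_ainv[simp]: "\<ominus>\<^bsub>CF\<^esub> x = - x"
  by (rule CFi.minus_equality) auto

lemma CF_inv[simp]: "x \<noteq> 0 \<Longrightarrow> inv\<^bsub>CF\<^esub> x = inverse x"
  by (rule CFi.inv_char) (auto simp: field_simps)

lemma CF_eval: "CFi.eval p x = (\<Sum>i<length p. p!i * x^(length p - 1 - i))"
proof (induction p)
  case (Cons a p)
  have "CFi.eval (a # p) x = a * x ^ length p + CFi.eval p x" by simp
  also have "\<dots> = a * x ^ length p + (\<Sum>i<length p. p!i * x^(length p - Suc i))"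
    using Cons by simp
  also have "\<dots> = (\<Sum>i<Suc (length p). (a#p)!i * x^(length p - i))"
    by (subst sum.lessThan_Suc_shift) simp
  finally show ?case by simp
qed simp

lemma subfield_CF: "is_subfield K \<Longrightarrow> subfield K CF"
  apply (rule field.subfieldI'[OF CF_field])
   apply (rule CFi.subringI)
  by (auto simp: sf1 sf_uminus sf_mult sf_add sf_inv)

lemma subfield_CF': "subfield K CF \<Longrightarrow> is_subfield K"
proof -
  assume K: "subfield K CF"
  have sr: "subring K CF" using K by (rule subfieldE(1))
  have 0: "0 \<in> K" and 1: "1 \<in> K" using subringE(2,3)[OF sr] by auto
  have m: "a * b \<in> K" "a + b \<in> K" "- a \<in> K" if "a \<in> K" "b \<in> K" for a b
    using subringE(5,6,7)[OF sr] that by auto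
  have d: "a - b \<in> K" if "a \<in> K" "b \<in> K" for a b using m[OF that(1) m(3)[OF that(2) that(2)]] by simp
  have i: "inverse a \<in> K" if "a \<in> K" for a
  proof (cases "a = 0")
    case True then show ?thesis using 0 by simp
  next
    case False
    then have "inv\<^bsub>CF\<^esub> a \<in> K" using CFi.subfield_m_inv(1)[OF K] that by auto
    then show ?thesis using False by simp
  qed
  show ?thesis unfolding is_subfield_def using 0 1 m d i by simp
qed

lemma alg_closure_imp_algebraic:
  assumes K: "is_subfield K" and x: "x \<in> alg_closure K"
  shows "(CFi.algebraic over K) x"
proof -
  from x obtain f where f: "f \<noteq> 0" "\<And>i. Polynomial.coeff f i \<in> K" "poly f x = 0"
    unfolding alg_closure_def by blast
  define p where "p = rev (coeffs f)"
  have lp: "length p = Suc (Polynomial.degree f)" using f(1) by (simp add: p_def length_coeffs)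
  have "p \<noteq> []" using lp by auto
  moreover have "p \<in> carrier (K[X]\<^bsub>CF\<^esub>)"
  proof -
    have "set p \<subseteq> K" using f(2) by (auto simp: p_def coeffs_def)
    moreover have "hd p \<noteq> 0" using f(1) by (simp add: p_def hd_rev last_coeffs_eq_coeff_degree)
    ultimately show ?thesis by (simp add: univ_poly_def polynomial_def)
  qed
  moreover have "CFi.eval p x = 0"
  proof -
    have "CFi.eval p x = (\<Sum>i<length p. Polynomial.coeff f (Polynomial.degree f - i) * x^(Polynomial.degree f - i))"
      unfolding CF_eval
    proof (rule sum.cong[OF refl])
      fix i assume "i \<in> {..<length p}"
      then have i: "i < Suc (Polynomial.degree f)" using lp by simp
      have "p ! i = coeffs f ! (Polynomial.degree f - i)"
        unfolding p_def using i f(1) by (simp add: rev_nth length_coeffs)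
      also have "\<dots> = Polynomial.coeff f (Polynomial.degree f - i)"
        using i f(1) by (simp add: coeffs_nth)
      finally show "p ! i * x ^ (length p - 1 - i) = Polynomial.coeff f (Polynomial.degree f - i) * x^(Polynomial.degree f - i)"
        using lp by simp
    qed
    also have "\<dots> = (\<Sum>j\<le>Polynomial.degree f. Polynomial.coeff f j * x^j)"
      unfolding lp by (rule sum.reindex_bij_witness[of _ "\<lambda>j. Polynomial.degree f - j" "\<lambda>j. Polynomial.degree f - j"]) auto
    also have "\<dots> = poly f x" by (simp add: poly_altdef)
    finally show ?thesis using f(3) by simp
  qed
  ultimately show ?thesis using CFi.algebraicI by auto
qed

lemma algebraic_imp_alg_closure:
  assumes K: "is_subfield K" and x: "(CFi.algebraic over K) x"
  shows "x \<in> alg_closure K"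
proof -
  have sr: "subring K CF" using subfield_CF[OF K] by (rule subfieldE(1))
  obtain p where p: "p \<in> carrier (K[X]\<^bsub>CF\<^esub>)" "p \<noteq> []" "CFi.eval p x = 0"
    using domain.algebraicE[OF CF_domain sr _ x] by auto
  have pK: "set p \<subseteq> K" and hp: "hd p \<noteq> 0" using p(1,2) by (auto simp: univ_poly_def polynomial_def)
  define n where "n = length p - 1"
  define f where "f = (\<Sum>i<length p. Polynomial.monom (p!i) (n - i))"
  have cf: "Polynomial.coeff f j = (if j \<le> n then p ! (n - j) else 0)" for j
  proof -
    have "Polynomial.coeff f j = (\<Sum>i<length p. if n - i = j then p!i else 0)"
      unfolding f_def coeff_sum by (simp add: coeff_monom)
    also have "\<dots> = (\<Sum>i<length p. if i = n - j \<and> j \<le> n then p!i else 0)"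
      by (rule sum.cong[OF refl]) (use p(2) in \<open>auto simp: n_def\<close>)
    also have "\<dots> = (if j \<le> n then p ! (n - j) else 0)"
      using p(2) by (cases "j \<le> n") (auto simp: n_def)
    finally show ?thesis by simp
  qed
  have "Polynomial.coeff f n = hd p" using cf p(2) by (simp add: hd_conv_nth)
  then have "f \<noteq> 0" using hp by auto
  moreover have "Polynomial.coeff f j \<in> K" for j
    using cf[of j] pK sf0[OF K] p(2) unfolding n_def by (auto intro!: nth_mem)
  moreover have "poly f x = 0"
  proof -
    have "poly f x = (\<Sum>i<length p. p!i * x^(n - i))" unfolding f_def by (simp add: poly_sum poly_monom)
    also have "\<dots> = CFi.eval p x" unfolding CF_eval n_def by simp
    finally show ?thesis using p(3) by simp
  qed
  ultimately show ?thesis unfolding alg_closure_def by blast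
qed

lemma alg_closure_mono: "K \<subseteq> K' \<Longrightarrow> alg_closure K \<subseteq> alg_closure K'"
  unfolding alg_closure_def by blast

lemma sub_alg_closure: "is_subfield K \<Longrightarrow> K \<subseteq> alg_closure K"
proof
  fix k assume K: "is_subfield K" and k: "k \<in> K"
  have "Polynomial.coeff [:-k, 1:] i \<in> K" for i
    using K k by (cases i) (auto simp: coeff_pCons sf0 sf1 sf_uminus split: nat.splits)
  moreover have "[:-k, 1:] \<noteq> (0::complex poly)" by simp
  moreover have "poly [:-k, 1:] k = 0" by simp
  ultimately show "k \<in> alg_closure K" unfolding alg_closure_def by blast
qed

lemma alg_closure_subfield:
  assumes K: "is_subfield K" shows "is_subfield (alg_closure K)"
proof -
  have "subfield {x \<in> carrier CF. (CFi.algebraic over K) x} CF"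
    by (rule field.subfield_of_algebraics[OF CF_field subfield_CF[OF K]])
  moreover have "{x \<in> carrier CF. (CFi.algebraic over K) x} = alg_closure K"
    using alg_closure_imp_algebraic[OF K] algebraic_imp_alg_closure[OF K] by auto
  ultimately show ?thesis using subfield_CF' by simp
qed

lemma coeff_in_coeffs: "Polynomial.coeff f i \<in> insert 0 (set (coeffs f))"
proof (cases "f = 0 \<or> i > Polynomial.degree f")
  case True then show ?thesis by (auto simp: coeff_eq_0)
next
  case False
  then have "Polynomial.coeff f i = coeffs f ! i" by (simp add: coeffs_nth)
  moreover have "i < length (coeffs f)" using False by (simp add: length_coeffs)
  ultimately show ?thesis by simp
qed

lemma alg_trans:
  assumes K: "is_subfield K" and f: "f \<noteq> 0" "\<And>i. Polynomial.coeff f i \<in> alg_closure K" "poly f w = 0"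
  shows "w \<in> alg_closure K"
proof -
  have KS: "subfield K CF" by (rule subfield_CF[OF K])
  have KR: "subring K CF" using KS by (rule subfieldE(1))
  define xs where "xs = coeffs f"
  have xsc: "set xs \<subseteq> carrier CF" by simp
  have xsa: "(CFi.algebraic over K) x" if "x \<in> set xs" for x
  proof -
    have "x \<in> alg_closure K"
    proof -
      from that obtain i where "i < length (coeffs f)" "x = coeffs f ! i" unfolding xs_def by (metis in_set_conv_nth)
      then have "x = Polynomial.coeff f i" using f(1) by (simp add: coeffs_nth length_coeffs)
      then show ?thesis using f(2) by simp
    qed
    then show ?thesis by (rule alg_closure_imp_algebraic[OF K])
  qed
  define E where "E = CFi.finite_extension K xs"
  have sfE: "subfield E CF" unfolding E_def
    by (rule domain.finite_extension_is_subfield[OF CF_domain KS xsc xsa])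
  have fdE: "CFi.finite_dimension K E" unfolding E_def
    by (rule domain.finite_extension_finite_dimension(1)[OF CF_domain KS xsc xsa])
  have xsE: "set xs \<subseteq> E" unfolding E_def by (rule domain.finite_extension_mem[OF CF_domain KR xsc])
  have Ef: "is_subfield E" by (rule subfield_CF'[OF sfE])
  have "w \<in> alg_closure E"
  proof -
    have "Polynomial.coeff f i \<in> E" for i
      using coeff_in_coeffs[of f i] xsE sf0[OF Ef] unfolding xs_def by auto
    then show ?thesis unfolding alg_closure_def using f by blast
  qed
  then have wE: "(CFi.algebraic over E) w" by (rule alg_closure_imp_algebraic[OF Ef])
  have fd2: "CFi.finite_dimension E (CFi.simple_extension E w)"
    using domain.finite_dimension_simple_extension[OF CF_domain sfE, of w] wE by simp
  have fd3: "CFi.finite_dimension K (CFi.simple_extension E w)"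
    by (rule CFi.telescopic_base_dim(1)[OF KS sfE fdE fd2])
  have ER: "subring E CF" using sfE by (rule subfieldE(1))
  have sub: "subring (CFi.simple_extension E w) CF"
    by (rule domain.simple_extension_is_subring[OF CF_domain ER]) simp
  have mem: "w \<in> CFi.simple_extension E w" by (rule CFi.simple_extension_mem[OF ER]) simp
  have "(CFi.algebraic over K) w" by (rule CFi.finite_dimension_imp_algebraic[OF KS sub fd3 mem])
  then show ?thesis by (rule algebraic_imp_alg_closure[OF K])
qed

lemma closure_sub:
  assumes K: "is_subfield K" and S: "S \<subseteq> alg_closure K"
  shows "alg_closure (field_gen S) \<subseteq> alg_closure K"
proof
  have gS: "field_gen S \<subseteq> alg_closure K" by (rule gen_least[OF alg_closure_subfield[OF K] S])
  fix w assume "w \<in> alg_closure (field_gen S)"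
  then obtain f where f: "f \<noteq> 0" "\<And>i. Polynomial.coeff f i \<in> field_gen S" "poly f w = 0"
    unfolding alg_closure_def by blast
  show "w \<in> alg_closure K" by (rule alg_trans[OF K f(1) _ f(3)]) (use f(2) gS in blast)
qed

lemma dep_algebraic:
  assumes ind: "alg_indep_set D" and s: "s \<notin> D" and dep: "\<not> alg_indep_set (insert s D)"
  shows "s \<in> alg_closure (field_gen D)"
proof -
  let ?e = "eval_qpoly (\<lambda>z::complex. z)"
  obtain P where P: "qvars P \<subseteq> insert s D" "?e P = 0" "P \<noteq> 0"
    using dep unfolding alg_indep_set_def alg_indep_def qvars_def by blast
  define Nd where "Nd = Max (insert 0 ((\<lambda>mo. Poly_Mapping.lookup mo s) ` Poly_Mapping.keys P))"
  have leNd: "Poly_Mapping.lookup mo s \<le> Nd" if "mo \<in> Poly_Mapping.keys P" for mo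
    unfolding Nd_def using that by (intro Max_ge) auto
  define Pj where "Pj j = (\<Sum>mo\<in>{mo \<in> Poly_Mapping.keys P. Poly_Mapping.lookup mo s = j}.
        Poly_Mapping.single (Poly_Mapping.update s 0 mo) (Poly_Mapping.lookup P mo))" for j
  have split: "mo = Poly_Mapping.update s 0 mo + Poly_Mapping.single s (Poly_Mapping.lookup mo s)" for mo :: "complex \<Rightarrow>\<^sub>0 nat"
    by (rule poly_mapping_eqI) (simp add: lookup_add lookup_update lookup_single when_def)
  have mono_split: "qmono x mo = qmono x (Poly_Mapping.update s 0 mo) * x s ^ Poly_Mapping.lookup mo s" for x :: "complex \<Rightarrow> complex" and mo
    by (subst split) (simp add: qmono_add)
  have eP: "?e P = (\<Sum>j\<le>Nd. ?e (Pj j) * s ^ j)"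
  proof -
    have "?e P = (\<Sum>mo\<in>Poly_Mapping.keys P. of_rat (Poly_Mapping.lookup P mo) * qmono (\<lambda>z. z) mo)"
      by (rule eval_qpoly_alt)
    also have "\<dots> = (\<Sum>j\<le>Nd. \<Sum>mo\<in>{mo \<in> Poly_Mapping.keys P. Poly_Mapping.lookup mo s = j}.
          of_rat (Poly_Mapping.lookup P mo) * qmono (\<lambda>z. z) mo)"
      by (rule sum.group[symmetric]) (use leNd in auto)
    also have "\<dots> = (\<Sum>j\<le>Nd. ?e (Pj j) * s ^ j)"
    proof (rule sum.cong[OF refl])
      fix j
      have "?e (Pj j) * s ^ j = (\<Sum>mo\<in>{mo \<in> Poly_Mapping.keys P. Poly_Mapping.lookup mo s = j}.
          of_rat (Poly_Mapping.lookup P mo) * qmono (\<lambda>z. z) (Poly_Mapping.update s 0 mo) * s ^ j)"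
        unfolding Pj_def eval_sum eval_single sum_distrib_right ..
      also have "\<dots> = (\<Sum>mo\<in>{mo \<in> Poly_Mapping.keys P. Poly_Mapping.lookup mo s = j}.
          of_rat (Poly_Mapping.lookup P mo) * qmono (\<lambda>z. z) mo)"
      proof (rule sum.cong[OF refl])
        fix mo assume "mo \<in> {mo \<in> Poly_Mapping.keys P. Poly_Mapping.lookup mo s = j}"
        then have "Poly_Mapping.lookup mo s = j" by simp
        then show "of_rat (Poly_Mapping.lookup P mo) * qmono (\<lambda>z. z) (Poly_Mapping.update s 0 mo) * s ^ j =
          of_rat (Poly_Mapping.lookup P mo) * qmono (\<lambda>z. z) mo"
          using mono_split[of "\<lambda>z. z" mo] by (simp add: mult.assoc)
      qed
      finally show "(\<Sum>mo\<in>{mo \<in> Poly_Mapping.keys P. Poly_Mapping.lookup mo s = j}.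
          of_rat (Poly_Mapping.lookup P mo) * qmono (\<lambda>z. z) mo) = ?e (Pj j) * s ^ j" by simp
    qed
    finally show ?thesis .
  qed
  have vPj: "qvars (Pj j) \<subseteq> D" for j
  proof -
    have "qvars (Pj j) \<subseteq> (\<Union>mo\<in>{mo \<in> Poly_Mapping.keys P. Poly_Mapping.lookup mo s = j}.
        qvars (Poly_Mapping.single (Poly_Mapping.update s 0 mo) (Poly_Mapping.lookup P mo)))"
      unfolding Pj_def by (rule qvars_sum)
    also have "\<dots> \<subseteq> D"
    proof (rule UN_least)
      fix mo assume mo: "mo \<in> {mo \<in> Poly_Mapping.keys P. Poly_Mapping.lookup mo s = j}"
      have "Poly_Mapping.keys mo \<subseteq> insert s D" using P(1) mo by (auto simp: qvars_def)
      then have "Poly_Mapping.keys (Poly_Mapping.update s 0 mo) \<subseteq> D" by (auto simp: keys_update)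
      then show "qvars (Poly_Mapping.single (Poly_Mapping.update s 0 mo) (Poly_Mapping.lookup P mo)) \<subseteq> D"
        using qvars_single by fast
    qed
    finally show ?thesis .
  qed
  define f where "f = (\<Sum>j\<le>Nd. Polynomial.monom (?e (Pj j)) j)"
  have cf: "Polynomial.coeff f i = (if i \<le> Nd then ?e (Pj i) else 0)" for i
    unfolding f_def coeff_sum by (simp add: coeff_monom)
  have pf: "poly f s = 0" unfolding f_def using eP P(2) by (simp add: poly_sum poly_monom)
  have cK: "Polynomial.coeff f i \<in> field_gen D" for i
    using cf[of i] eval_in_gen[OF vPj] sf0[OF subfield_gen] by simp
  obtain mo0 where mo0: "mo0 \<in> Poly_Mapping.keys P" using P(3) by (metis all_not_in_conv keys_eq_empty)
  define j0 where "j0 = Poly_Mapping.lookup mo0 s"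
  have "Poly_Mapping.lookup (Pj j0) (Poly_Mapping.update s 0 mo0) =
     (\<Sum>mo\<in>{mo \<in> Poly_Mapping.keys P. Poly_Mapping.lookup mo s = j0}.
        if mo = mo0 then Poly_Mapping.lookup P mo else 0)"
    unfolding Pj_def lookup_sum
  proof (rule sum.cong[OF refl])
    fix mo assume mo: "mo \<in> {mo \<in> Poly_Mapping.keys P. Poly_Mapping.lookup mo s = j0}"
    have "Poly_Mapping.update s 0 mo = Poly_Mapping.update s 0 mo0 \<longleftrightarrow> mo = mo0"
    proof
      assume h: "Poly_Mapping.update s 0 mo = Poly_Mapping.update s 0 mo0"
      show "mo = mo0" using mo split[of mo] split[of mo0] h unfolding j0_def by simp
    qed simp
    then show "Poly_Mapping.lookup (Poly_Mapping.single (Poly_Mapping.update s 0 mo) (Poly_Mapping.lookup P mo))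
         (Poly_Mapping.update s 0 mo0) = (if mo = mo0 then Poly_Mapping.lookup P mo else 0)"
      by (simp add: lookup_single when_def)
  qed
  also have "\<dots> = Poly_Mapping.lookup P mo0" using mo0 by (simp add: j0_def)
  finally have "Pj j0 \<noteq> 0" using mo0 by (auto simp: in_keys_iff)
  then have "?e (Pj j0) \<noteq> 0" using alg_indep_zero[OF ind[unfolded alg_indep_set_def] vPj] by blast
  moreover have "j0 \<le> Nd" using leNd[OF mo0] by (simp add: j0_def)
  ultimately have "Polynomial.coeff f j0 \<noteq> 0" using cf by simp
  then have "f \<noteq> 0" by auto
  then show ?thesis unfolding alg_closure_def using cK pf by blast
qed

definition pd :: "'i \<Rightarrow> 'i qpoly \<Rightarrow> 'i qpoly" where
  "pd i P = (\<Sum>mo\<in>Poly_Mapping.keys P.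
     Poly_Mapping.single (mo - Poly_Mapping.single i 1) (of_nat (Poly_Mapping.lookup mo i) * Poly_Mapping.lookup P mo))"

lemma eval_pd: "eval_qpoly x (pd i P) = (\<Sum>mo\<in>Poly_Mapping.keys P.
     of_rat (Poly_Mapping.lookup P mo) * of_nat (Poly_Mapping.lookup mo i) * qmono x (mo - Poly_Mapping.single i 1))"
  unfolding pd_def eval_sum eval_single by (simp add: of_rat_mult ac_simps)

lemma qmono_minus:
  assumes "i \<in> Poly_Mapping.keys mo"
  shows "qmono x (mo - Poly_Mapping.single i 1) =
    x i ^ (Poly_Mapping.lookup mo i - 1) * (\<Prod>y\<in>Poly_Mapping.keys mo - {i}. x y ^ Poly_Mapping.lookup mo y)"
proof -
  have "Poly_Mapping.keys (mo - Poly_Mapping.single i 1) \<subseteq> Poly_Mapping.keys mo"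
    by (auto simp: in_keys_iff lookup_minus lookup_single when_def)
  then have "qmono x (mo - Poly_Mapping.single i 1) =
      (\<Prod>y\<in>Poly_Mapping.keys mo. x y ^ Poly_Mapping.lookup (mo - Poly_Mapping.single i 1) y)"
    by (rule qmono_superset[rotated]) simp
  also have "\<dots> = x i ^ Poly_Mapping.lookup (mo - Poly_Mapping.single i 1) i *
     (\<Prod>y\<in>Poly_Mapping.keys mo - {i}. x y ^ Poly_Mapping.lookup (mo - Poly_Mapping.single i 1) y)"
    using assms by (simp add: prod.remove)
  also have "\<dots> = x i ^ (Poly_Mapping.lookup mo i - 1) * (\<Prod>y\<in>Poly_Mapping.keys mo - {i}. x y ^ Poly_Mapping.lookup mo y)"
  proof -
    have "(\<Prod>y\<in>Poly_Mapping.keys mo - {i}. x y ^ Poly_Mapping.lookup (mo - Poly_Mapping.single i 1) y) =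
          (\<Prod>y\<in>Poly_Mapping.keys mo - {i}. x y ^ Poly_Mapping.lookup mo y)"
      by (rule prod.cong[OF refl]) (auto simp: lookup_minus lookup_single when_def)
    moreover have "Poly_Mapping.lookup (mo - Poly_Mapping.single i 1) i = Poly_Mapping.lookup mo i - 1"
      by (simp add: lookup_minus)
    ultimately show ?thesis by simp
  qed
  finally show ?thesis .
qed

lemma eval_deriv:
  fixes P :: "'i qpoly" and h :: "'i \<Rightarrow> real \<Rightarrow> real"
  assumes d: "\<And>i. i \<in> qvars P \<Longrightarrow> (h i has_real_derivative h' i) (at t)"
  shows "((\<lambda>t. eval_qpoly (\<lambda>i. h i t) P) has_real_derivative
           (\<Sum>i\<in>qvars P. eval_qpoly (\<lambda>i. h i t) (pd i P) * h' i)) (at t)"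
proof -
  let ?x = "\<lambda>i. h i t"
  have mon: "((\<lambda>t. \<Prod>i\<in>Poly_Mapping.keys mo. h i t ^ Poly_Mapping.lookup mo i) has_real_derivative
      (\<Sum>i\<in>Poly_Mapping.keys mo. of_nat (Poly_Mapping.lookup mo i) * qmono ?x (mo - Poly_Mapping.single i 1) * h' i)) (at t)"
    if mo: "mo \<in> Poly_Mapping.keys P" for mo
  proof -
    have "((\<lambda>t. \<Prod>i\<in>Poly_Mapping.keys mo. h i t ^ Poly_Mapping.lookup mo i) has_real_derivative
      (\<Sum>i\<in>Poly_Mapping.keys mo. (of_nat (Poly_Mapping.lookup mo i) * h' i * h i t ^ (Poly_Mapping.lookup mo i - Suc 0)) *
          (\<Prod>y\<in>Poly_Mapping.keys mo - {i}. h y t ^ Poly_Mapping.lookup mo y))) (at t)"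
    proof (rule has_field_derivative_prod)
      fix i assume "i \<in> Poly_Mapping.keys mo"
      then have "i \<in> qvars P" using mo by (auto simp: qvars_def)
      then show "((\<lambda>u. h i u ^ Poly_Mapping.lookup mo i) has_real_derivative
          of_nat (Poly_Mapping.lookup mo i) * h' i * h i t ^ (Poly_Mapping.lookup mo i - Suc 0)) (at t)"
        using DERIV_power[OF d, of i "Poly_Mapping.lookup mo i"] by (simp add: mult.assoc)
    qed
    moreover have "(\<Sum>i\<in>Poly_Mapping.keys mo. (of_nat (Poly_Mapping.lookup mo i) * h' i * h i t ^ (Poly_Mapping.lookup mo i - Suc 0)) *
          (\<Prod>y\<in>Poly_Mapping.keys mo - {i}. h y t ^ Poly_Mapping.lookup mo y)) =
       (\<Sum>i\<in>Poly_Mapping.keys mo. of_nat (Poly_Mapping.lookup mo i) * qmono ?x (mo - Poly_Mapping.single i 1) * h' i)"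
    proof (rule sum.cong[OF refl])
      fix j assume j: "j \<in> Poly_Mapping.keys mo"
      show "(of_nat (Poly_Mapping.lookup mo j) * h' j * h j t ^ (Poly_Mapping.lookup mo j - Suc 0)) *
          (\<Prod>y\<in>Poly_Mapping.keys mo - {j}. h y t ^ Poly_Mapping.lookup mo y) =
          of_nat (Poly_Mapping.lookup mo j) * qmono ?x (mo - Poly_Mapping.single j 1) * h' j"
        unfolding qmono_minus[OF j, of ?x] by (simp add: ac_simps)
    qed
    ultimately show ?thesis by simp
  qed
  have "((\<lambda>t. \<Sum>mo\<in>Poly_Mapping.keys P. of_rat (Poly_Mapping.lookup P mo) *
          (\<Prod>i\<in>Poly_Mapping.keys mo. h i t ^ Poly_Mapping.lookup mo i)) has_real_derivative
     (\<Sum>mo\<in>Poly_Mapping.keys P. of_rat (Poly_Mapping.lookup P mo) *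
       (\<Sum>i\<in>Poly_Mapping.keys mo. of_nat (Poly_Mapping.lookup mo i) * qmono ?x (mo - Poly_Mapping.single i 1) * h' i))) (at t)"
    by (intro DERIV_sum DERIV_cmult mon)
  moreover have "(\<Sum>mo\<in>Poly_Mapping.keys P. of_rat (Poly_Mapping.lookup P mo) *
       (\<Sum>i\<in>Poly_Mapping.keys mo. of_nat (Poly_Mapping.lookup mo i) * qmono ?x (mo - Poly_Mapping.single i 1) * h' i))
     = (\<Sum>i\<in>qvars P. eval_qpoly ?x (pd i P) * h' i)"
  proof -
    have "(\<Sum>mo\<in>Poly_Mapping.keys P. of_rat (Poly_Mapping.lookup P mo) *
       (\<Sum>i\<in>Poly_Mapping.keys mo. of_nat (Poly_Mapping.lookup mo i) * qmono ?x (mo - Poly_Mapping.single i 1) * h' i))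
      = (\<Sum>mo\<in>Poly_Mapping.keys P. \<Sum>i\<in>qvars P. of_rat (Poly_Mapping.lookup P mo) *
         (of_nat (Poly_Mapping.lookup mo i) * qmono ?x (mo - Poly_Mapping.single i 1) * h' i))"
    proof (rule sum.cong[OF refl])
      fix mo assume mo: "mo \<in> Poly_Mapping.keys P"
      have "(\<Sum>i\<in>Poly_Mapping.keys mo. of_nat (Poly_Mapping.lookup mo i) * qmono ?x (mo - Poly_Mapping.single i 1) * h' i)
          = (\<Sum>i\<in>qvars P. of_nat (Poly_Mapping.lookup mo i) * qmono ?x (mo - Poly_Mapping.single i 1) * h' i)"
        by (rule sum.mono_neutral_left) (use mo in \<open>auto simp: qvars_def in_keys_iff\<close>)
      then show "of_rat (Poly_Mapping.lookup P mo) *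
       (\<Sum>i\<in>Poly_Mapping.keys mo. of_nat (Poly_Mapping.lookup mo i) * qmono ?x (mo - Poly_Mapping.single i 1) * h' i)
        = (\<Sum>i\<in>qvars P. of_rat (Poly_Mapping.lookup P mo) *
         (of_nat (Poly_Mapping.lookup mo i) * qmono ?x (mo - Poly_Mapping.single i 1) * h' i))"
        by (simp add: sum_distrib_left)
    qed
    also have "\<dots> = (\<Sum>i\<in>qvars P. eval_qpoly ?x (pd i P) * h' i)"
      by (subst sum.swap) (simp add: eval_pd sum_distrib_right sum_distrib_left ac_simps)
    finally show ?thesis .
  qed
  ultimately show ?thesis by (simp add: eval_qpoly_def)
qed

lemma pd_qvars: "qvars (pd i P) \<subseteq> qvars P"
proof -
  have "qvars (pd i P) \<subseteq> (\<Union>mo\<in>Poly_Mapping.keys P. qvars (Poly_Mapping.single (mo - Poly_Mapping.single i 1)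
      (of_nat (Poly_Mapping.lookup mo i) * Poly_Mapping.lookup P mo)))"
    unfolding pd_def by (rule qvars_sum)
  also have "\<dots> \<subseteq> (\<Union>mo\<in>Poly_Mapping.keys P. Poly_Mapping.keys (mo - Poly_Mapping.single i 1))"
    using qvars_single by fast
  also have "\<dots> \<subseteq> qvars P"
    by (auto simp: qvars_def in_keys_iff lookup_minus lookup_single when_def split: if_splits)
  finally show ?thesis .
qed

lemma keys_pd: "Poly_Mapping.keys (pd i P) \<subseteq>
   (\<lambda>mo. mo - Poly_Mapping.single i 1) ` {mo \<in> Poly_Mapping.keys P. Poly_Mapping.lookup mo i \<noteq> 0}"
proof -
  have "Poly_Mapping.keys (pd i P) \<subseteq> (\<Union>mo\<in>Poly_Mapping.keys P. Poly_Mapping.keys (Poly_Mapping.single (mo - Poly_Mapping.single i 1)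
      (of_nat (Poly_Mapping.lookup mo i) * Poly_Mapping.lookup P mo)))"
    unfolding pd_def by (rule keys_sum)
  also have "\<dots> \<subseteq> (\<lambda>mo. mo - Poly_Mapping.single i 1) ` {mo \<in> Poly_Mapping.keys P. Poly_Mapping.lookup mo i \<noteq> 0}"
    by (auto simp: in_keys_iff)
  finally show ?thesis .
qed

lemma msize_minus: "Poly_Mapping.lookup mo i \<noteq> 0 \<Longrightarrow> msize (mo - Poly_Mapping.single i 1) < msize mo"
proof -
  assume h: "Poly_Mapping.lookup mo i \<noteq> 0"
  have e: "mo = (mo - Poly_Mapping.single i 1) + Poly_Mapping.single i 1"
  proof (rule poly_mapping_eqI)
    fix k show "Poly_Mapping.lookup mo k = Poly_Mapping.lookup ((mo - Poly_Mapping.single i 1) + Poly_Mapping.single i 1) k"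
      by (cases "k = i") (use h in \<open>auto simp: lookup_add lookup_minus lookup_single when_def\<close>)
  qed
  have "msize mo = msize ((mo - Poly_Mapping.single i 1) + Poly_Mapping.single i 1)"
    using e by (rule arg_cong)
  also have "\<dots> = msize (mo - Poly_Mapping.single i 1) + 1"
    by (simp only: msize_add) (simp add: msize_def)
  finally have "msize mo = msize (mo - Poly_Mapping.single i 1) + 1" .
  then show ?thesis by simp
qed

lemma pd_tdeg: "pd i P \<noteq> 0 \<Longrightarrow> tdeg (pd i P) < tdeg P"
proof -
  assume nz: "pd i P \<noteq> 0"
  then obtain k where k: "k \<in> Poly_Mapping.keys (pd i P)" by (metis all_not_in_conv keys_eq_empty)
  have "k \<in> (\<lambda>mo. mo - Poly_Mapping.single i 1) ` {mo \<in> Poly_Mapping.keys P. Poly_Mapping.lookup mo i \<noteq> 0}"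
    using keys_pd[of i P] k by (rule subsetD)
  then obtain mo where mo: "mo \<in> Poly_Mapping.keys P" "Poly_Mapping.lookup mo i \<noteq> 0" by auto
  have pos: "0 < tdeg P" using msize_minus[OF mo(2)] msize_le_tdeg[OF mo(1)] by linarith
  have "tdeg (pd i P) \<le> tdeg P - 1"
    unfolding tdeg_le_iff
  proof
    fix k assume "k \<in> Poly_Mapping.keys (pd i P)"
    then have "k \<in> (\<lambda>mo. mo - Poly_Mapping.single i 1) ` {mo \<in> Poly_Mapping.keys P. Poly_Mapping.lookup mo i \<noteq> 0}"
      using keys_pd[of i P] by (rule subsetD[rotated])
    then obtain mo where "mo \<in> Poly_Mapping.keys P" "Poly_Mapping.lookup mo i \<noteq> 0" "k = mo - Poly_Mapping.single i 1"
      by auto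
    then show "msize k \<le> tdeg P - 1" using msize_minus[of mo i] msize_le_tdeg[of mo P] by simp
  qed
  then show ?thesis using pos by linarith
qed

lemma pd_zero_if: "i \<notin> qvars P \<Longrightarrow> pd i P = 0"
  unfolding pd_def by (rule sum.neutral) (auto simp: qvars_def in_keys_iff)

lemma pd_all_zero:
  assumes "\<And>i. pd i P = 0" and "P \<noteq> 0"
  shows "eval_qpoly x P \<noteq> 0"
proof -
  have "Poly_Mapping.keys P \<subseteq> {0}"
  proof
    fix mo0 assume mo0: "mo0 \<in> Poly_Mapping.keys P"
    show "mo0 \<in> {0}"
    proof (rule ccontr)
      assume "mo0 \<notin> {0}"
      then obtain i where i: "i \<in> Poly_Mapping.keys mo0" by (metis keys_eq_empty all_not_in_conv singletonI)
      have "Poly_Mapping.lookup (pd i P) (mo0 - Poly_Mapping.single i 1) =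
         (\<Sum>mo\<in>Poly_Mapping.keys P. if mo = mo0 then of_nat (Poly_Mapping.lookup mo i) * Poly_Mapping.lookup P mo else 0)"
        unfolding pd_def lookup_sum
      proof (rule sum.cong[OF refl])
        fix mo assume "mo \<in> Poly_Mapping.keys P"
        show "Poly_Mapping.lookup (Poly_Mapping.single (mo - Poly_Mapping.single i 1) (of_nat (Poly_Mapping.lookup mo i) * Poly_Mapping.lookup P mo))
            (mo0 - Poly_Mapping.single i 1) =
           (if mo = mo0 then of_nat (Poly_Mapping.lookup mo i) * Poly_Mapping.lookup P mo else 0)"
        proof (cases "Poly_Mapping.lookup mo i = 0")
          case True then show ?thesis using i by (auto simp: in_keys_iff lookup_single when_def)
        next
          case False
          have "mo - Poly_Mapping.single i 1 = mo0 - Poly_Mapping.single i 1 \<longleftrightarrow> mo = mo0"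
          proof
            assume h: "mo - Poly_Mapping.single i 1 = mo0 - Poly_Mapping.single i 1"
            show "mo = mo0"
            proof (rule poly_mapping_eqI)
              fix k
              have "Poly_Mapping.lookup (mo - Poly_Mapping.single i 1) k = Poly_Mapping.lookup (mo0 - Poly_Mapping.single i 1) k"
                using h by simp
              then show "Poly_Mapping.lookup mo k = Poly_Mapping.lookup mo0 k"
                using False i by (auto simp: lookup_minus lookup_single when_def in_keys_iff split: if_splits)
            qed
          qed simp
          then show ?thesis by (auto simp: lookup_single when_def)
        qed
      qed
      also have "\<dots> = of_nat (Poly_Mapping.lookup mo0 i) * Poly_Mapping.lookup P mo0" using mo0 by simp
      finally have "Poly_Mapping.lookup (pd i P) (mo0 - Poly_Mapping.single i 1) \<noteq> 0"
        using i mo0 by (simp add: in_keys_iff)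
      then show False using assms(1) by simp
    qed
  qed
  then have "Poly_Mapping.keys P = {0}" using assms(2) by (metis keys_eq_empty subset_singletonD)
  moreover then have "Poly_Mapping.lookup P 0 \<noteq> 0" by (metis in_keys_iff singletonI)
  ultimately show ?thesis by (simp add: eval_qpoly_alt)
qed

definition dpoly :: "'v \<times> 'v \<Rightarrow> ('v \<times> bool) qpoly" where
  "dpoly e = (qvar (fst e, False) - qvar (snd e, False))^2 + (qvar (fst e, True) - qvar (snd e, True))^2"

lemma eval_dpoly: "eval_qpoly y (dpoly e) = (y (fst e, False) - y (snd e, False))^2 + (y (fst e, True) - y (snd e, True))^2"
  by (simp add: dpoly_def eval_add eval_power eval_diff)

lemma qvars_dpoly: "qvars (dpoly e) \<subseteq> {fst e, snd e} \<times> UNIV"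
proof -
  have a: "qvars (qvar (fst e, b) - qvar (snd e, b)) \<subseteq> {fst e, snd e} \<times> UNIV" for b
    using qvars_diff[of "qvar (fst e, b)" "qvar (snd e, b)"] by auto
  have b: "qvars ((qvar (fst e, b) - qvar (snd e, b))^2) \<subseteq> {fst e, snd e} \<times> UNIV" for b
    using qvars_power[of "qvar (fst e, b) - qvar (snd e, b)" 2] a[of b] by blast
  show ?thesis unfolding dpoly_def
    using qvars_add[of "(qvar (fst e, False) - qvar (snd e, False))^2" "(qvar (fst e, True) - qvar (snd e, True))^2"]
      b[of False] b[of True] by blast
qed

lemma dpoly_coord: "eval_qpoly (coord p) (dpoly e) = dsq (cdiff (p (fst e)) (p (snd e)))"
  by (simp add: eval_dpoly coord_def dsq_def cdiff_def)

lemma deriv_dpoly: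
  fixes pr :: "'v \<Rightarrow> real \<times> real"
  assumes uv: "u \<noteq> v"
  shows "((\<lambda>t. eval_qpoly (\<lambda>w. coord pr w + (if w = c then t else 0)) (dpoly (u,v))) has_real_derivative
           2 * rig_row pr (u,v) c) (at 0)"
proof (cases c)
  case (Pair w i)
  let ?a = "\<lambda>b. coord pr (u, b) - coord pr (v, b)"
  have "((\<lambda>t. eval_qpoly (\<lambda>w. coord pr w + (if w = c then t else 0)) (dpoly (u,v))) has_real_derivative
     2 * ?a False * ((if (u,False) = c then 1 else 0) - (if (v,False) = c then 1 else 0)) +
     2 * ?a True * ((if (u,True) = c then 1 else 0) - (if (v,True) = c then 1 else 0))) (at 0)"
    unfolding eval_dpoly fst_conv snd_conv
    by (auto intro!: derivative_eq_intros)
  moreover have "2 * ?a False * ((if (u,False) = c then 1 else 0) - (if (v,False) = c then 1 else 0)) +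
     2 * ?a True * ((if (u,True) = c then 1 else 0) - (if (v,True) = c then 1 else 0)) = 2 * rig_row pr (u,v) c"
    using uv unfolding Pair by (cases i) (auto simp: rig_row_def)
  ultimately show ?thesis by simp
qed

lemma jacobian:
  fixes V :: "'v set" and E :: "('v \<times> 'v) set" and pr :: "'v \<Rightarrow> real \<times> real"
    and p0 :: "'v \<Rightarrow> complex \<times> complex" and F :: "('v \<times> 'v) set"
  assumes G: "graph V E" and gr: "generic_real V pr" and g0: "generic V p0" and FE: "F \<subseteq> E"
    and ind: "\<forall>c :: 'v \<times> 'v \<Rightarrow> real. (\<forall>x. (\<Sum>e\<in>F. c e * rig_row pr e x) = 0) \<longrightarrow> (\<forall>e\<in>F. c e = 0)"
  shows "inj_on (\<lambda>e. eval_qpoly (coord p0) (dpoly e)) F \<and>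
         alg_indep_set ((\<lambda>e. eval_qpoly (coord p0) (dpoly e)) ` F)"
proof -
  define dv where "dv e = eval_qpoly (coord p0) (dpoly e)" for e
  have finE: "finite E" and EV: "E \<subseteq> V \<times> V" and uv: "\<And>u v. (u,v) \<in> E \<Longrightarrow> u \<noteq> v"
    using G unfolding graph_def by (auto intro: finite_subset[of E "V \<times> V"])
  have finF: "finite F" using finE FE by (rule finite_subset[rotated])
  have G1: "Q = 0" if "qvars Q \<subseteq> V \<times> UNIV" "eval_qpoly (coord p0) Q = 0" for Q
    using alg_indep_zero[OF g0[unfolded generic_def] that] .
  have G1r: "Q = 0" if "qvars Q \<subseteq> V \<times> UNIV" "eval_qpoly (coord pr) Q = 0" for Q
    using alg_indep_zero[OF gr[unfolded generic_real_def] that] .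
  have qv: "qvars (dpoly e) \<subseteq> V \<times> UNIV" if "e \<in> F" for e
    using qvars_dpoly[of e] that FE EV by (cases e) auto
  define yc where "yc c t = (\<lambda>w. coord pr w + (if w = c then t else (0::real)))" for c t
  have yc0: "yc c 0 = coord pr" for c by (simp add: yc_def fun_eq_iff)
  have dd: "((\<lambda>t. eval_qpoly (yc c t) (dpoly e)) has_real_derivative 2 * rig_row pr e c) (at 0)"
    if "e \<in> F" for e c
  proof (cases e)
    case (Pair u v)
    then have "u \<noteq> v" using that FE uv by auto
    then show ?thesis unfolding Pair yc_def by (rule deriv_dpoly)
  qed
  have inj: "inj_on dv F"
  proof (rule inj_onI, rule ccontr)
    fix e f assume ef: "e \<in> F" "f \<in> F" "dv e = dv f" "e \<noteq> f"
    have vq: "qvars (dpoly e - dpoly f) \<subseteq> V \<times> UNIV"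
      using qvars_diff[of "dpoly e" "dpoly f"] qv[OF ef(1)] qv[OF ef(2)] by blast
    have "dpoly e - dpoly f = 0"
      by (rule G1[OF vq]) (use ef(3) in \<open>simp add: eval_diff dv_def\<close>)
    then have eq: "eval_qpoly y (dpoly e) = eval_qpoly y (dpoly f)" for y :: "'v \<times> bool \<Rightarrow> real"
      using eval_diff[of y "dpoly e" "dpoly f"] by simp
    have rr: "rig_row pr e c = rig_row pr f c" for c
    proof -
      have "((\<lambda>t. eval_qpoly (yc c t) (dpoly e)) has_real_derivative 2 * rig_row pr f c) (at 0)"
        using dd[OF ef(2), of c] by (simp add: eq)
      with dd[OF ef(1), of c] have "2 * rig_row pr e c = 2 * rig_row pr f c" by (rule DERIV_unique)
      then show ?thesis by simp
    qed
    define cf where "cf x = (if x = e then 1 else if x = f then -1 else (0::real))" for x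
    have "(\<Sum>x\<in>F. cf x * rig_row pr x c) = 0" for c
    proof -
      have "(\<Sum>x\<in>F. cf x * rig_row pr x c) = (\<Sum>x\<in>F. (if x = e then rig_row pr e c else 0) - (if x = f then rig_row pr f c else 0))"
        by (rule sum.cong[OF refl]) (use ef(4) in \<open>auto simp: cf_def\<close>)
      also have "\<dots> = rig_row pr e c - rig_row pr f c"
        using ef(1,2) finF by (simp add: sum_subtractf)
      finally show ?thesis using rr by simp
    qed
    then have "cf e = 0" using ind ef(1) by blast
    then show False by (simp add: cf_def)
  qed
  define D where "D = dv ` F"
  have "alg_indep_set D"
  proof (rule ccontr)
    assume "\<not> alg_indep_set D"
    then have "\<exists>P. qvars P \<subseteq> D \<and> eval_qpoly (\<lambda>z. z) P = 0 \<and> P \<noteq> 0"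
      unfolding alg_indep_set_def alg_indep_def qvars_def by blast
    then obtain P where P: "qvars P \<subseteq> D \<and> eval_qpoly (\<lambda>z. z) P = 0 \<and> P \<noteq> 0"
      and Pmin: "\<forall>Q. qvars Q \<subseteq> D \<and> eval_qpoly (\<lambda>z. z) Q = 0 \<and> Q \<noteq> 0 \<longrightarrow> tdeg P \<le> tdeg Q"
      using ex_has_least_nat[of "\<lambda>Q. qvars Q \<subseteq> D \<and> eval_qpoly (\<lambda>z. z) Q = 0 \<and> Q \<noteq> 0" _ tdeg] by blast
    define ez where "ez z = (SOME e. e \<in> F \<and> dv e = z)" for z
    have ez: "ez z \<in> F \<and> dv (ez z) = z" if "z \<in> D" for z
      unfolding ez_def by (rule someI_ex) (use that in \<open>auto simp: D_def\<close>)
    define \<sigma> where "\<sigma> z = dpoly (ez z)" for z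
    have vsub: "qvars (qsubst \<sigma> Q) \<subseteq> V \<times> UNIV" if "qvars Q \<subseteq> D" for Q
      using qvars_subst[of \<sigma> Q] that ez qv unfolding \<sigma>_def by blast
    have evp0: "eval_qpoly (coord p0) (qsubst \<sigma> Q) = eval_qpoly (\<lambda>z. z) Q" if "qvars Q \<subseteq> D" for Q
      unfolding eval_qsubst
      by (rule eval_cong) (use that ez in \<open>auto simp: \<sigma>_def dv_def\<close>)
    have clA: "eval_qpoly (\<lambda>z. eval_qpoly y (\<sigma> z)) Q = 0"
      if "qvars Q \<subseteq> D" "eval_qpoly (\<lambda>z. z) Q = 0" for Q and y :: "'v \<times> bool \<Rightarrow> real"
    proof -
      have "qsubst \<sigma> Q = 0" by (rule G1[OF vsub[OF that(1)]]) (simp add: evp0 that)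
      then show ?thesis using eval_qsubst[of y \<sigma> Q] by simp
    qed
    have clB: "eval_qpoly (\<lambda>z. z) Q = 0"
      if "qvars Q \<subseteq> D" "eval_qpoly (\<lambda>z. eval_qpoly (coord pr) (\<sigma> z)) Q = 0" for Q
    proof -
      have "qsubst \<sigma> Q = 0" by (rule G1r[OF vsub[OF that(1)]]) (simp add: eval_qsubst that)
      then show ?thesis using evp0[OF that(1)] by simp
    qed
    let ?v = "\<lambda>z. eval_qpoly (coord pr) (\<sigma> z)"
    have sumz: "(\<Sum>z\<in>qvars P. eval_qpoly ?v (pd z P) * (2 * rig_row pr (ez z) c)) = 0" for c
    proof -
      have d1: "((\<lambda>t. eval_qpoly (\<lambda>z. eval_qpoly (yc c t) (\<sigma> z)) P) has_real_derivative
           (\<Sum>z\<in>qvars P. eval_qpoly (\<lambda>z. eval_qpoly (yc c 0) (\<sigma> z)) (pd z P) * (2 * rig_row pr (ez z) c))) (at 0)"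
      proof (rule eval_deriv)
        fix z assume "z \<in> qvars P"
        then have "z \<in> D" using P by blast
        then show "((\<lambda>t. eval_qpoly (yc c t) (\<sigma> z)) has_real_derivative 2 * rig_row pr (ez z) c) (at 0)"
          unfolding \<sigma>_def using dd[of "ez z" c] ez by blast
      qed
      have "(\<lambda>t. eval_qpoly (\<lambda>z. eval_qpoly (yc c t) (\<sigma> z)) P) = (\<lambda>t. 0)"
        using clA P by auto
      then have d2: "((\<lambda>t. eval_qpoly (\<lambda>z. eval_qpoly (yc c t) (\<sigma> z)) P) has_real_derivative 0) (at 0)"
        by simp
      show ?thesis using DERIV_unique[OF d1 d2] by (simp add: yc0)
    qed
    have injez: "inj_on ez (qvars P)"
      by (rule inj_onI) (metis P ez subsetD)
    define cc where "cc e = (if e \<in> ez ` qvars P then 2 * eval_qpoly ?v (pd (dv e) P) else 0)" for e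
    have "(\<Sum>e\<in>F. cc e * rig_row pr e x) = 0" for x
    proof -
      have sub: "ez ` qvars P \<subseteq> F" using P ez by blast
      have "(\<Sum>e\<in>F. cc e * rig_row pr e x) = (\<Sum>e\<in>ez ` qvars P. cc e * rig_row pr e x)"
        by (rule sum.mono_neutral_right[OF finF sub]) (auto simp: cc_def)
      also have "\<dots> = (\<Sum>z\<in>qvars P. cc (ez z) * rig_row pr (ez z) x)"
        by (rule sum.reindex[OF injez, unfolded comp_def])
      also have "\<dots> = (\<Sum>z\<in>qvars P. eval_qpoly ?v (pd z P) * (2 * rig_row pr (ez z) x))"
        by (rule sum.cong[OF refl]) (use P ez in \<open>auto simp: cc_def\<close>)
      finally show ?thesis using sumz by simp
    qed
    then have cc0: "\<forall>e\<in>F. cc e = 0" using ind by blast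
    have "pd z P = 0" for z
    proof (cases "z \<in> qvars P")
      case False then show ?thesis by (rule pd_zero_if)
    next
      case True
      have "ez z \<in> F" "dv (ez z) = z" using ez True P by auto
      then have "eval_qpoly ?v (pd z P) = 0" using cc0 True by (auto simp: cc_def)
      moreover have vz: "qvars (pd z P) \<subseteq> D" using pd_qvars[of z P] P by blast
      ultimately have ez0: "eval_qpoly (\<lambda>z. z) (pd z P) = 0" using clB by blast
      show ?thesis
      proof (rule ccontr)
        assume "pd z P \<noteq> 0"
        then have "tdeg (pd z P) < tdeg P" by (rule pd_tdeg)
        moreover have "tdeg P \<le> tdeg (pd z P)" using Pmin vz ez0 \<open>pd z P \<noteq> 0\<close> by blast
        ultimately show False by simp
      qed
    qed
    then have "eval_qpoly (\<lambda>z. z) P \<noteq> 0" using pd_all_zero P by blast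
    then show False using P by simp
  qed
  then show ?thesis using inj unfolding D_def dv_def by simp
qed

lemma key_field:
  assumes Sf: "finite S" and Sk: "card S \<le> k" and K: "is_subfield K" and KS: "K \<subseteq> field_gen S"
    and Df: "finite D" and DK: "D \<subseteq> K" and Di: "alg_indep_set D" and Dk: "card D = k"
  shows "alg_closure (field_gen S) = alg_closure K \<and> trdeg (field_gen S) = enat k"
proof -
  have DL: "D \<subseteq> field_gen S" using DK KS by blast
  have bound: "card B \<le> k" if "finite B" "B \<subseteq> field_gen S" "alg_indep_set B" for B
    using card_indep_le[OF Sf that] Sk by simp
  have SD: "S \<subseteq> alg_closure (field_gen D)"
  proof
    fix s assume s: "s \<in> S"
    show "s \<in> alg_closure (field_gen D)"
    proof (cases "s \<in> D")
      case True
      then show ?thesis using gen_sub[of D] sub_alg_closure[OF subfield_gen[of D]] by blast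
    next
      case False
      have "\<not> alg_indep_set (insert s D)"
      proof
        assume "alg_indep_set (insert s D)"
        moreover have "insert s D \<subseteq> field_gen S" using s DL gen_sub[of S] by blast
        ultimately have "card (insert s D) \<le> k" using bound Df by blast
        then show False using False Df Dk by simp
      qed
      then show ?thesis by (rule dep_algebraic[OF Di False])
    qed
  qed
  have "alg_closure (field_gen S) \<subseteq> alg_closure (field_gen D)"
    by (rule closure_sub[OF subfield_gen SD])
  also have "\<dots> \<subseteq> alg_closure K" by (rule alg_closure_mono[OF gen_least[OF K DK]])
  finally have c1: "alg_closure (field_gen S) \<subseteq> alg_closure K" .
  have c2: "alg_closure K \<subseteq> alg_closure (field_gen S)" by (rule alg_closure_mono[OF KS])
  have "trdeg (field_gen S) = enat k"
    unfolding trdeg_def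
  proof (rule antisym)
    show "(SUP B\<in>{B. finite B \<and> B \<subseteq> field_gen S \<and> alg_indep_set B}. enat (card B)) \<le> enat k"
      by (rule SUP_least) (use bound in auto)
    show "enat k \<le> (SUP B\<in>{B. finite B \<and> B \<subseteq> field_gen S \<and> alg_indep_set B}. enat (card B))"
      using Dk by (intro SUP_upper2[of D]) (use Df DL Di in auto)
  qed
  then show ?thesis using c1 c2 by blast
qed

lemma dsq_in: "is_subfield L \<Longrightarrow> fst P \<in> L \<Longrightarrow> snd P \<in> L \<Longrightarrow> fst Q \<in> L \<Longrightarrow> snd Q \<in> L \<Longrightarrow>
   dsq (cdiff P Q) \<in> L"
  unfolding dsq_def cdiff_def by (simp add: sf_add sf_diff sf_power)

lemma realisation_field:
  fixes V :: "'v set" and E and p r :: "'v \<Rightarrow> complex \<times> complex" and n :: nat and D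
  assumes G: "graph V E" and cV: "card V = n" and n3: "n \<ge> 3"
    and v1: "v1 \<in> V" and v2: "v2 \<in> V" and v12: "v1 \<noteq> v2"
    and eq: "equivalent E p r" and r1: "r v1 = (0, 0)" and r2: "r v2 = (0, w)"
    and Df: "finite D" and DK: "D \<subseteq> dG E p" and Di: "alg_indep_set D" and Dk: "card D = 2 * n - 3"
  shows "alg_closure (field_gen (coords V r)) = alg_closure (field_gen (dG E p))
       \<and> trdeg (field_gen (coords V r)) = enat (2 * n - 3)"
proof -
  have finV: "finite V" and EV: "E \<subseteq> V \<times> V" using G unfolding graph_def by auto
  define S where "S = coords V r - {0}"
  have cdef: "coords V r = coord r ` (V \<times> UNIV)" by (simp add: coords_def)
  have Sf: "finite S" unfolding S_def cdef using finV by simp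
  define Z where "Z = {(v1, False), (v1, True), (v2, False)}"
  have ZV: "Z \<subseteq> V \<times> UNIV" using v1 v2 by (auto simp: Z_def)
  have Z0: "coord r z = 0" if "z \<in> Z" for z using that r1 r2 by (auto simp: Z_def coord_def)
  have cZ: "card Z = 3" using v12 by (simp add: Z_def)
  have cVU: "card (V \<times> (UNIV :: bool set)) = 2 * n" using cV finV by (simp add: card_cartesian_product)
  have SS: "S \<subseteq> coord r ` (V \<times> UNIV - Z)" unfolding S_def cdef using Z0 by auto
  have Sk: "card S \<le> 2 * n - 3"
  proof -
    have "card S \<le> card (coord r ` (V \<times> UNIV - Z))"
      by (rule card_mono[OF _ SS]) (use finV in simp)
    also have "\<dots> \<le> card (V \<times> (UNIV :: bool set) - Z)" by (rule card_image_le) (use finV in simp)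
    also have "\<dots> = 2 * n - 3" using card_Diff_subset[OF _ ZV] cZ cVU finV
      by (metis finite_SigmaI finite_UNIV finite_subset ZV finite_code)
    finally show ?thesis .
  qed
  have LS: "field_gen (coords V r) = field_gen S"
  proof
    show "field_gen S \<subseteq> field_gen (coords V r)" by (rule gen_mono) (auto simp: S_def)
    have "coords V r \<subseteq> field_gen S" using gen_sub[of S] sf0[OF subfield_gen[of S]] unfolding S_def by blast
    then show "field_gen (coords V r) \<subseteq> field_gen S" by (rule gen_least[OF subfield_gen])
  qed
  have dGeq: "dG E p = dG E r"
    using eq unfolding equivalent_def dG_def by (force simp: image_def)
  have dGL: "dG E p \<subseteq> field_gen (coords V r)"
  proof
    fix d assume "d \<in> dG E p"
    then have "d \<in> dG E r" using dGeq by simp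
    then obtain u v where uv: "(u,v) \<in> E" "d = dsq (cdiff (r u) (r v))"
      unfolding dG_def by auto
    have "u \<in> V" "v \<in> V" using uv EV by auto
    have cm: "fst (r x) \<in> coords V r \<and> snd (r x) \<in> coords V r" if "x \<in> V" for x
    proof -
      have "coord r (x, False) \<in> coords V r" "coord r (x, True) \<in> coords V r"
        using that unfolding coords_def by auto
      then show ?thesis by (simp add: coord_def)
    qed
    have "fst (r x) \<in> field_gen (coords V r) \<and> snd (r x) \<in> field_gen (coords V r)" if "x \<in> {u, v}" for x
      using that cm[of x] gen_sub[of "coords V r"] \<open>u \<in> V\<close> \<open>v \<in> V\<close> by blast
    then show "d \<in> field_gen (coords V r)" unfolding uv(2) by (intro dsq_in[OF subfield_gen]) auto
  qed
  have KL: "field_gen (dG E p) \<subseteq> field_gen S" using gen_least[OF subfield_gen dGL] LS by simp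
  have DK': "D \<subseteq> field_gen (dG E p)" using DK gen_sub by blast
  show ?thesis using key_field[OF Sf Sk subfield_gen KL Df DK' Di Dk] LS by simp
qed

theorem lemma5p5:
  fixes V :: "'v set" and E :: "('v \<times> 'v) set" and n :: nat
    and v1 v2 :: 'v and p q :: "'v \<Rightarrow> complex \<times> complex" and y z :: complex
  assumes "graph V E" and "rigid V E"
    and "card V = n" and "n \<ge> 3"
    and "v1 \<in> V" and "v2 \<in> V" and "v1 \<noteq> v2"
    and "quasi_generic V p" and "p v1 = (0, 0)" and "p v2 = (0, y)"
    and "equivalent E p q" and "q v1 = (0, 0)" and "q v2 = (0, z)"
  shows "alg_closure (field_gen (coords V p)) = alg_closure (field_gen (coords V q))
       \<and> alg_closure (field_gen (coords V q)) = alg_closure (field_gen (dG E p))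
       \<and> trdeg (field_gen (coords V q)) = enat (2 * n - 3)"
proof -
  note G = assms(1)
  have finV: "finite V" and EV: "E \<subseteq> V \<times> V" using G unfolding graph_def by auto
  have finE: "finite E" using finV EV by (meson finite_SigmaI finite_subset)
  obtain pr where gr: "generic_real V pr" and rk: "rig_rank E pr = 2 * card V - 3"
    using assms(2) unfolding rigid_def by blast
  define Fs where "Fs = {card F | F. F \<subseteq> E \<and>
      (\<forall>c :: 'v \<times> 'v \<Rightarrow> real. (\<forall>x. (\<Sum>e\<in>F. c e * rig_row pr e x) = 0) \<longrightarrow> (\<forall>e\<in>F. c e = 0))}"
  have "finite Fs"
  proof -
    have "Fs \<subseteq> card ` Pow E" unfolding Fs_def by auto
    then show ?thesis using finE by (meson finite_Pow_iff finite_imageI finite_subset)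
  qed
  moreover have "Fs \<noteq> {}" unfolding Fs_def by (auto intro!: exI[of _ "{}"])
  ultimately have "Max Fs \<in> Fs" by (rule Max_in)
  then obtain F where FE: "F \<subseteq> E"
    and ind: "\<forall>c :: 'v \<times> 'v \<Rightarrow> real. (\<forall>x. (\<Sum>e\<in>F. c e * rig_row pr e x) = 0) \<longrightarrow> (\<forall>e\<in>F. c e = 0)"
    and cF: "card F = 2 * n - 3"
    using rk assms(3) unfolding rig_rank_def Fs_def[symmetric] by (auto simp: Fs_def)
  obtain p0 where g0: "generic V p0" and cong: "congruent_rlz V p p0"
    using assms(8) unfolding quasi_generic_def by blast
  have J: "inj_on (\<lambda>e. eval_qpoly (coord p0) (dpoly e)) F \<and>
         alg_indep_set ((\<lambda>e. eval_qpoly (coord p0) (dpoly e)) ` F)"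
    by (rule jacobian[OF G gr g0 FE ind])
  define D where "D = (\<lambda>e. eval_qpoly (coord p0) (dpoly e)) ` F"
  have finF: "finite F" using finE FE by (rule finite_subset[rotated])
  have Df: "finite D" unfolding D_def using finF by simp
  have Di: "alg_indep_set D" using J unfolding D_def by simp
  have Dk: "card D = 2 * n - 3" unfolding D_def using J cF by (simp add: card_image)
  have DK: "D \<subseteq> dG E p"
  proof
    fix d assume "d \<in> D"
    then obtain u v where uv: "(u,v) \<in> F" "d = eval_qpoly (coord p0) (dpoly (u,v))" unfolding D_def by auto
    have "u \<in> V" "v \<in> V" using uv FE EV by auto
    then have "d = dsq (cdiff (p u) (p v))" using cong uv(2) unfolding congruent_rlz_def
      by (simp add: dpoly_coord)
    then show "d \<in> dG E p" using uv FE unfolding dG_def by force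
  qed
  have eqp: "equivalent E p p" by (simp add: equivalent_def)
  have Rp: "alg_closure (field_gen (coords V p)) = alg_closure (field_gen (dG E p))
       \<and> trdeg (field_gen (coords V p)) = enat (2 * n - 3)"
    by (rule realisation_field[OF G assms(3,4,5,6,7) eqp assms(9,10) Df DK Di Dk])
  have Rq: "alg_closure (field_gen (coords V q)) = alg_closure (field_gen (dG E p))
       \<and> trdeg (field_gen (coords V q)) = enat (2 * n - 3)"
    by (rule realisation_field[OF G assms(3,4,5,6,7) assms(11,12,13) Df DK Di Dk])
  show ?thesis using Rp Rq by simp
qed

end
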